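(* Let $\Gamma$ be a finite group and $\mathbf{E}=\bigoplus_{w\in\Gamma}\mathbf{E}_w$ a finite-dimensional associative $\bar{\mathbb{Q}}_l$-algebra with $1$, with $\dim\mathbf{E}_w=1$ and $\mathbf{E}_w\mathbf{E}_y=\mathbf{E}_{wy}$; choose basis elements $b_w\in\mathbf{E}_w$. Let $\iota:\mathbf{E}\to\mathbf{E}$ be an algebra automorphism. Let $V_1,\dots,V_{r'}$ be representatives of the isomorphism classes of simple $\mathbf{E}$-modules, numbered so that exactly for $i\in[1,r]$ there exists a $\bar{\mathbb{Q}}_l$-linear isomorphism $\iota_i:V_i\to V_i$ with $\iota_i(ev)=\iota(e)\iota_i(v)$ for all $e\in\mathbf{E}$, $v\in V_i$; fix such $\iota_i$ for $i\in[1,r]$. Then for any $w,w'\in\Gamma$, $\sum_{i=1}^r\mathrm{tr}(b_w\iota_i,V_i)\,\mathrm{tr}(\iota_i^{-1}b_{w'}^{-1},V_i)$ equals the trace of the linear map $\kappa:\mathbf{E}\to\mathbf{E}$, $e\mapsto b_{w'}^{-1}\iota^{-1}(e)b_w$. *)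

theory Defs
  imports "HOL-Algebra.Group" "Jordan_Normal_Form.Matrix"
begin

definition alg_closed_field :: "'k::field itself \<Rightarrow> bool" where
  "alg_closed_field _ \<longleftrightarrow>
     (\<forall>n::nat. \<forall>a::nat \<Rightarrow> 'k. n > 0 \<longrightarrow> (\<exists>x. x ^ n + (\<Sum>j<n. a j * x ^ j) = 0))"

text \<open>A finite-dimensional-agnostic associative unital algebra over the field 'k:
  the ring 'e (ring_1 gives associativity and 1) with a scalar multiplication
  making it a 'k-vector space, compatible with the ring multiplication.\<close>
definition is_algebra :: "('k::field \<Rightarrow> 'e::ring_1 \<Rightarrow> 'e) \<Rightarrow> bool" where
  "is_algebra s \<longleftrightarrow> vector_space s \<and>
     (\<forall>c x y. s c (x * y) = s c x * y \<and> s c (x * y) = x * s c y)"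

definition is_alg_auto :: "('k::field \<Rightarrow> 'e::ring_1 \<Rightarrow> 'e) \<Rightarrow> ('e \<Rightarrow> 'e) \<Rightarrow> bool" where
  "is_alg_auto s f \<longleftrightarrow> bij f \<and> Vector_Spaces.linear s s f \<and>
     (\<forall>x y. f (x * y) = f x * f y) \<and> f 1 = 1"

definition ring_inv :: "'e::ring_1 \<Rightarrow> 'e" where
  "ring_inv x = (THE y. x * y = 1 \<and> y * x = 1)"

definition lin_trace :: "('k::field \<Rightarrow> 'v::ab_group_add \<Rightarrow> 'v) \<Rightarrow> 'v set \<Rightarrow> ('v \<Rightarrow> 'v) \<Rightarrow> 'k" where
  "lin_trace s V f =
     (let B = (SOME B. B \<subseteq> V \<and> \<not> module.dependent s B \<and> module.span s B = V)
      in \<Sum>b\<in>B. module.representation s B (f b) b)"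

definition mat_trace :: "'a::comm_ring_1 mat \<Rightarrow> 'a" where
  "mat_trace A = (\<Sum>i<dim_row A. A $$ (i, i))"

definition mat_inv :: "'a::comm_ring_1 mat \<Rightarrow> 'a mat" where
  "mat_inv A = (THE B. B \<in> carrier_mat (dim_row A) (dim_row A) \<and>
                    A * B = 1\<^sub>m (dim_row A) \<and> B * A = 1\<^sub>m (dim_row A))"

text \<open>A (finite-dimensional) module over the algebra (s, 'e) of dimension n,
  given by its representation matrices (w.r.t. a basis of k^n).\<close>
definition is_rep :: "('k::field \<Rightarrow> 'e::ring_1 \<Rightarrow> 'e) \<Rightarrow> nat \<Rightarrow> ('e \<Rightarrow> 'k mat) \<Rightarrow> bool" where
  "is_rep s n \<rho> \<longleftrightarrow>
     (\<forall>e. \<rho> e \<in> carrier_mat n n) \<and>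
     (\<forall>x y. \<rho> (x + y) = \<rho> x + \<rho> y) \<and>
     (\<forall>c x. \<rho> (s c x) = c \<cdot>\<^sub>m \<rho> x) \<and>
     (\<forall>x y. \<rho> (x * y) = \<rho> x * \<rho> y) \<and>
     \<rho> 1 = 1\<^sub>m n"

definition is_simple_rep :: "('k::field \<Rightarrow> 'e::ring_1 \<Rightarrow> 'e) \<Rightarrow> nat \<Rightarrow> ('e \<Rightarrow> 'k mat) \<Rightarrow> bool" where
  "is_simple_rep s n \<rho> \<longleftrightarrow> is_rep s n \<rho> \<and> n > 0 \<and>
     (\<forall>W \<subseteq> carrier_vec n.
        (0\<^sub>v n \<in> W \<and> (\<forall>v\<in>W. \<forall>u\<in>W. v + u \<in> W) \<and> (\<forall>c. \<forall>v\<in>W. c \<cdot>\<^sub>v v \<in> W) \<and>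
         (\<forall>e. \<forall>v\<in>W. \<rho> e *\<^sub>v v \<in> W))
        \<longrightarrow> W = {0\<^sub>v n} \<or> W = carrier_vec n)"

definition rep_iso :: "nat \<Rightarrow> ('e \<Rightarrow> 'k::field mat) \<Rightarrow> nat \<Rightarrow> ('e \<Rightarrow> 'k mat) \<Rightarrow> bool" where
  "rep_iso n \<rho> m \<sigma> \<longleftrightarrow> n = m \<and>
     (\<exists>P \<in> carrier_mat n n. invertible_mat P \<and> (\<forall>e. P * \<rho> e = \<sigma> e * P))"

end

theory Submission
  imports Defs "Jordan_Normal_Form.Determinant" "Jordan_Normal_Form.Char_Poly"
begin

definition msum :: "nat \<Rightarrow> nat \<Rightarrow> ('x \<Rightarrow> 'a::comm_ring_1 mat) \<Rightarrow> 'x set \<Rightarrow> 'a mat" where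
  "msum n m f S = mat n m (\<lambda>(p,q). \<Sum>x\<in>S. f x $$ (p,q))"

lemma msum_carrier[simp]: "msum n m f S \<in> carrier_mat n m"
  unfolding msum_def by simp

lemma msum_dims[simp]: "dim_row (msum n m f S) = n" "dim_col (msum n m f S) = m"
  unfolding msum_def by simp_all

lemma msum_index[simp]: "p < n \<Longrightarrow> q < m \<Longrightarrow> msum n m f S $$ (p,q) = (\<Sum>x\<in>S. f x $$ (p,q))"
  unfolding msum_def by simp

lemma mult_entry: "A \<in> carrier_mat a n \<Longrightarrow> B \<in> carrier_mat n c \<Longrightarrow> p < a \<Longrightarrow> q < c \<Longrightarrow>
  (A * B) $$ (p,q) = (\<Sum>k<n. A $$ (p,k) * B $$ (k,q))"
  by (auto simp: scalar_prod_def intro!: sum.cong)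

lemma mult_msum:
  assumes A: "A \<in> carrier_mat a n" and f: "\<And>x. x \<in> S \<Longrightarrow> f x \<in> carrier_mat n m"
  shows "A * msum n m f S = msum a m (\<lambda>x. A * f x) S"
proof (rule eq_matI)
  fix p q assume pq: "p < dim_row (msum a m (\<lambda>x. A * f x) S)" "q < dim_col (msum a m (\<lambda>x. A * f x) S)"
  hence p: "p < a" and q: "q < m" by auto
  have "(A * msum n m f S) $$ (p,q) = (\<Sum>k<n. A $$ (p,k) * (\<Sum>x\<in>S. f x $$ (k,q)))"
    using mult_entry[OF A msum_carrier p q] q by simp
  also have "\<dots> = (\<Sum>x\<in>S. \<Sum>k<n. A $$ (p,k) * f x $$ (k,q))"
    by (simp add: sum_distrib_left sum.swap[of _ S])
  also have "\<dots> = (\<Sum>x\<in>S. (A * f x) $$ (p,q))"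
    by (rule sum.cong, simp, subst mult_entry[OF A f p q], auto)
  finally show "(A * msum n m f S) $$ (p,q) = msum a m (\<lambda>x. A * f x) S $$ (p,q)" using p q by simp
qed (use A in auto)

lemma msum_mult:
  assumes B: "B \<in> carrier_mat m c" and f: "\<And>x. x \<in> S \<Longrightarrow> f x \<in> carrier_mat n m"
  shows "msum n m f S * B = msum n c (\<lambda>x. f x * B) S"
proof (rule eq_matI)
  fix p q assume pq: "p < dim_row (msum n c (\<lambda>x. f x * B) S)" "q < dim_col (msum n c (\<lambda>x. f x * B) S)"
  hence p: "p < n" and q: "q < c" by auto
  have "(msum n m f S * B) $$ (p,q) = (\<Sum>k<m. (\<Sum>x\<in>S. f x $$ (p,k)) * B $$ (k,q))"
    using mult_entry[OF msum_carrier B p q] p by simp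
  also have "\<dots> = (\<Sum>x\<in>S. \<Sum>k<m. f x $$ (p,k) * B $$ (k,q))"
    by (simp add: sum_distrib_right sum.swap[of _ S])
  also have "\<dots> = (\<Sum>x\<in>S. (f x * B) $$ (p,q))"
    by (rule sum.cong, simp, subst mult_entry[OF f B p q], auto)
  finally show "(msum n m f S * B) $$ (p,q) = msum n c (\<lambda>x. f x * B) S $$ (p,q)" using p q by simp
qed (use B in auto)

lemma trace_msum: "(\<And>x. x \<in> S \<Longrightarrow> f x \<in> carrier_mat n n) \<Longrightarrow> mat_trace (msum n n f S) = (\<Sum>x\<in>S. mat_trace (f x))"
  unfolding mat_trace_def by (auto simp add: sum.swap[of _ S] intro!: sum.cong)

lemma trace_comm:
  assumes A: "A \<in> carrier_mat n m" and B: "B \<in> carrier_mat m n"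
  shows "mat_trace (A * B) = mat_trace (B * A)"
proof -
  have "mat_trace (A * B) = (\<Sum>i<n. \<Sum>k<m. A $$ (i,k) * B $$ (k,i))"
    unfolding mat_trace_def using A B by (intro sum.cong) (auto simp del: index_mult_mat(1) simp: mult_entry[OF A B] dest: carrier_matD)
  also have "\<dots> = (\<Sum>k<m. \<Sum>i<n. B $$ (k,i) * A $$ (i,k))"
    by (subst sum.swap, simp add: mult.commute)
  also have "\<dots> = mat_trace (B * A)"
    unfolding mat_trace_def using A B by (intro sum.cong) (auto simp del: index_mult_mat(1) simp: mult_entry[OF B A] dest: carrier_matD)
  finally show ?thesis .
qed

lemma trace_smult: "A \<in> carrier_mat n n \<Longrightarrow> mat_trace (c \<cdot>\<^sub>m A) = c * mat_trace A"
  unfolding mat_trace_def by (auto simp add: sum_distrib_left intro!: sum.cong)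

lemma trace_one: "mat_trace (1\<^sub>m n :: 'a::comm_ring_1 mat) = of_nat n"
  unfolding mat_trace_def by simp

definition umat :: "nat \<Rightarrow> nat \<Rightarrow> nat \<Rightarrow> nat \<Rightarrow> 'a::comm_ring_1 mat" where
  "umat n m q t = mat n m (\<lambda>(i,j). if i = q \<and> j = t then 1 else 0)"

lemma umat_carrier[simp]: "umat n m q t \<in> carrier_mat n m"
  unfolding umat_def by simp

lemma umat_prod:
  assumes A: "A \<in> carrier_mat a n" and B: "B \<in> carrier_mat m c"
    and q: "q < n" and t: "t < m" and p: "p < a" and l: "l < c"
  shows "(A * umat n m q t * B) $$ (p,l) = A $$ (p,q) * B $$ (t,l)"
proof -
  have AU: "A * umat n m q t \<in> carrier_mat a m" using A by simp
  have 1: "(A * umat n m q t) $$ (p,j) = (if j = t then A $$ (p,q) else 0)" if j: "j < m" for j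
  proof -
    have "(A * umat n m q t) $$ (p,j) = (\<Sum>k<n. A $$ (p,k) * umat n m q t $$ (k,j))"
      by (rule mult_entry[OF A umat_carrier p j])
    also have "\<dots> = (\<Sum>k<n. if k = q then (if j = t then A $$ (p,q) else 0) else 0)"
      by (rule sum.cong, simp, use j in \<open>auto simp: umat_def\<close>)
    also have "\<dots> = (if j = t then A $$ (p,q) else 0)" using q by simp
    finally show ?thesis .
  qed
  have "(A * umat n m q t * B) $$ (p,l) = (\<Sum>j<m. (A * umat n m q t) $$ (p,j) * B $$ (j,l))"
    by (rule mult_entry[OF AU B p l])
  also have "\<dots> = (\<Sum>j<m. if j = t then A $$ (p,q) * B $$ (t,l) else 0)"
    by (rule sum.cong, simp, simp add: 1)
  also have "\<dots> = A $$ (p,q) * B $$ (t,l)" using t by simp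
  finally show ?thesis .
qed

lemma trace_umat: "q < n \<Longrightarrow> t < n \<Longrightarrow> mat_trace (umat n n q t :: 'a::comm_ring_1 mat) = (if q = t then 1 else 0)"
  unfolding mat_trace_def umat_def by (cases "q = t") (auto intro: sum.neutral)

lemma mat_vec_unit: "(A :: 'a::comm_ring_1 mat) \<in> carrier_mat n m \<Longrightarrow> i < n \<Longrightarrow> j < m \<Longrightarrow> (A *\<^sub>v unit_vec m j) $ i = A $$ (i,j)"
proof -
  assume A: "A \<in> carrier_mat n m" and i: "i < n" and j: "j < m"
  have "(A *\<^sub>v unit_vec m j) $ i = (\<Sum>ia\<in>{0..<m}. A $$ (i,ia) * (if ia = j then 1 else 0))"
    using A i j by (simp add: scalar_prod_def unit_vec_def)
  also have "\<dots> = (\<Sum>ia\<in>{0..<m}. if ia = j then A $$ (i,ia) else 0)"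
    by (rule sum.cong) auto
  also have "\<dots> = A $$ (i,j)" using j by simp
  finally show ?thesis .
qed

lemma mat_eq_vecI:
  assumes A: "(A :: 'a::comm_ring_1 mat) \<in> carrier_mat n m" and B: "B \<in> carrier_mat n m"
    and eq: "\<And>v. v \<in> carrier_vec m \<Longrightarrow> A *\<^sub>v v = B *\<^sub>v v"
  shows "A = B"
proof (rule eq_matI)
  fix i j assume "i < dim_row B" "j < dim_col B"
  hence i: "i < n" and j: "j < m" using B by auto
  show "A $$ (i,j) = B $$ (i,j)"
    using mat_vec_unit[OF A i j] mat_vec_unit[OF B i j] eq[of "unit_vec m j"] by simp
qed (use A B in auto)


lemma mat_vec_zero: "A \<in> carrier_mat n m \<Longrightarrow> A *\<^sub>v 0\<^sub>v m = (0\<^sub>v n :: 'a::comm_ring_1 vec)"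
  by (rule eq_vecI) (auto simp: scalar_prod_def)

lemma zero_mat_vec: "v \<in> carrier_vec m \<Longrightarrow> 0\<^sub>m n m *\<^sub>v v = (0\<^sub>v n :: 'a::comm_ring_1 vec)"
  by (rule eq_vecI) (auto simp: scalar_prod_def)

lemma smult_mat_vec: "A \<in> carrier_mat n m \<Longrightarrow> v \<in> carrier_vec m \<Longrightarrow> (c \<cdot>\<^sub>m A) *\<^sub>v v = c \<cdot>\<^sub>v (A *\<^sub>v v :: 'a::comm_ring_1 vec)"
proof -
  assume A: "A \<in> carrier_mat n m" and v: "v \<in> carrier_vec m"
  show ?thesis
  proof (rule eq_vecI)
    fix i assume "i < dim_vec (c \<cdot>\<^sub>v (A *\<^sub>v v))"
    hence i: "i < n" using A by simp
    have "((c \<cdot>\<^sub>m A) *\<^sub>v v) $ i = (\<Sum>j\<in>{0..<m}. (c * A $$ (i,j)) * v $ j)"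
      using A v i by (simp add: scalar_prod_def)
    also have "\<dots> = c * (\<Sum>j\<in>{0..<m}. A $$ (i,j) * v $ j)"
      by (simp add: sum_distrib_left ac_simps)
    also have "\<dots> = (c \<cdot>\<^sub>v (A *\<^sub>v v)) $ i"
      using A v i by (simp add: scalar_prod_def)
    finally show "((c \<cdot>\<^sub>m A) *\<^sub>v v) $ i = (c \<cdot>\<^sub>v (A *\<^sub>v v)) $ i" .
  qed (use A in simp)
qed

lemma inj_dim:
  fixes A :: "'a::field mat"
  assumes A: "A \<in> carrier_mat m n"
    and inj: "\<And>v. v \<in> carrier_vec n \<Longrightarrow> A *\<^sub>v v = 0\<^sub>v m \<Longrightarrow> v = 0\<^sub>v n"
  shows "n \<le> m"
proof (rule ccontr)
  assume "\<not> n \<le> m"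
  hence mn: "m < n" by simp
  define A' where "A' = mat n n (\<lambda>(i,j). if i < m then A $$ (i,j) else 0)"
  have A'c: "A' \<in> carrier_mat n n" unfolding A'_def by simp
  have A'Tc: "transpose_mat A' \<in> carrier_mat n n" using A'c by simp
  have "transpose_mat A' *\<^sub>v unit_vec n (n - 1) = 0\<^sub>v n"
  proof (rule eq_vecI)
    fix i assume "i < dim_vec (0\<^sub>v n :: 'a vec)"
    hence i: "i < n" by simp
    have "(transpose_mat A' *\<^sub>v unit_vec n (n - 1)) $ i = transpose_mat A' $$ (i, n - 1)"
      by (rule mat_vec_unit[OF A'Tc i], use mn in simp)
    also have "\<dots> = 0" using i mn by (simp add: A'_def)
    finally show "(transpose_mat A' *\<^sub>v unit_vec n (n - 1)) $ i = 0\<^sub>v n $ i" using i by simp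
  qed (simp add: A'_def)
  moreover have "unit_vec n (n - 1) \<noteq> (0\<^sub>v n :: 'a vec)"
  proof
    assume "unit_vec n (n - 1) = (0\<^sub>v n :: 'a vec)"
    hence "unit_vec n (n - 1) $ (n - 1) = (0\<^sub>v n :: 'a vec) $ (n - 1)" by simp
    thus False using mn by simp
  qed
  ultimately have "det (transpose_mat A') = 0"
    using det_0_iff_vec_prod_zero_field[OF A'Tc] by (metis unit_vec_carrier)
  hence "det A' = 0" using det_transpose[OF A'c] by simp
  then obtain v where v: "v \<in> carrier_vec n" "v \<noteq> 0\<^sub>v n" "A' *\<^sub>v v = 0\<^sub>v n"
    using det_0_iff_vec_prod_zero_field[OF A'c] by blast
  have "A *\<^sub>v v = 0\<^sub>v m"
  proof (rule eq_vecI)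
    fix i assume "i < dim_vec (0\<^sub>v m :: 'a vec)"
    hence i: "i < m" by simp
    have "(A *\<^sub>v v) $ i = (A' *\<^sub>v v) $ i"
      using i mn A v(1) by (auto simp: A'_def scalar_prod_def intro!: sum.cong)
    thus "(A *\<^sub>v v) $ i = 0\<^sub>v m $ i" using v(3) i mn by simp
  qed (use A in simp)
  from inj[OF v(1) this] v(2) show False by simp
qed

lemma surj_dim:
  fixes A :: "'a::field mat"
  assumes A: "A \<in> carrier_mat m n"
    and surj: "\<And>u. u \<in> carrier_vec m \<Longrightarrow> \<exists>v\<in>carrier_vec n. A *\<^sub>v v = u"
  shows "m \<le> n"
proof (rule inj_dim[of "transpose_mat A" n m])
  show "transpose_mat A \<in> carrier_mat n m" using A by simp
  fix u :: "'a vec" assume u: "u \<in> carrier_vec m" and Au: "transpose_mat A *\<^sub>v u = 0\<^sub>v n"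
  show "u = 0\<^sub>v m"
  proof (rule eq_vecI)
    fix p assume "p < dim_vec (0\<^sub>v m :: 'a vec)"
    hence p: "p < m" by simp
    obtain v where v: "v \<in> carrier_vec n" "A *\<^sub>v v = unit_vec m p" using surj[of "unit_vec m p"] by auto
    have "u $ p = u \<bullet> unit_vec m p" using p by (simp add: scalar_prod_right_unit)
    also have "\<dots> = u \<bullet> (A *\<^sub>v v)" using v by simp
    also have "\<dots> = (transpose_mat A *\<^sub>v u) \<bullet> v" using transpose_vec_mult_scalar[OF A v(1) u] by simp
    also have "\<dots> = 0" using Au v(1) by simp
    finally show "u $ p = 0\<^sub>v m $ p" using p by simp
  qed (use u in simp)
qed

lemma inj_invertible:
  fixes A :: "'a::field mat"
  assumes A: "A \<in> carrier_mat n n"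
    and inj: "\<And>v. v \<in> carrier_vec n \<Longrightarrow> A *\<^sub>v v = 0\<^sub>v n \<Longrightarrow> v = 0\<^sub>v n"
  shows "invertible_mat A"
proof -
  have "det A \<noteq> 0"
  proof
    assume "det A = 0"
    then obtain v where "v \<in> carrier_vec n" "v \<noteq> 0\<^sub>v n" "A *\<^sub>v v = 0\<^sub>v n"
      using det_0_iff_vec_prod_zero_field[OF A] by blast
    with inj show False by simp
  qed
  from det_non_zero_imp_unit[OF A this, of "()"]
  obtain B where B: "B \<in> carrier_mat n n" "B * A = 1\<^sub>m n" "A * B = 1\<^sub>m n"
    unfolding Units_def by (auto simp: ring_mat_simps)
  show ?thesis unfolding invertible_mat_def inverts_mat_def using A B by auto
qed

lemma mat_inv_props:
  fixes A :: "'a::comm_ring_1 mat"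
  assumes A: "A \<in> carrier_mat n n" and inv: "invertible_mat A"
  shows "mat_inv A \<in> carrier_mat n n \<and> A * mat_inv A = 1\<^sub>m n \<and> mat_inv A * A = 1\<^sub>m n"
proof -
  from inv obtain B where AB: "A * B = 1\<^sub>m n" and BA: "B * A = 1\<^sub>m (dim_row B)"
    unfolding invertible_mat_def inverts_mat_def using A by auto
  have "dim_col B = n" using AB A by (metis index_mult_mat(3) index_one_mat(3))
  moreover have "dim_row B = n" using BA A by (metis index_mult_mat(3) index_one_mat(3) carrier_matD(2))
  ultimately have Bc: "B \<in> carrier_mat n n" by auto
  have BA': "B * A = 1\<^sub>m n" using BA Bc by simp
  have uniq: "C = B" if C: "C \<in> carrier_mat n n" "A * C = 1\<^sub>m n" "C * A = 1\<^sub>m n" for C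
  proof -
    have "C = C * (A * B)" using C by (simp add: AB)
    also have "\<dots> = (C * A) * B" by (rule assoc_mult_mat[symmetric, OF C(1) A Bc])
    also have "\<dots> = B" using C Bc by simp
    finally show ?thesis .
  qed
  have dA: "dim_row A = n" using A by simp
  have "mat_inv A = B" unfolding mat_inv_def dA
  proof (rule the_equality)
    show "B \<in> carrier_mat n n \<and> A * B = 1\<^sub>m n \<and> B * A = 1\<^sub>m n" using Bc AB BA' by simp
    fix C assume C: "C \<in> carrier_mat n n \<and> A * C = 1\<^sub>m n \<and> C * A = 1\<^sub>m n"
    show "C = B" by (rule uniq) (use C in simp_all)
  qed
  thus ?thesis using Bc AB BA' by simp
qed

lemma alg_closed_root:
  fixes p :: "'k::field poly"
  assumes cl: "alg_closed_field TYPE('k)" and deg: "degree p = n" "coeff p n = 1" and n: "n > 0"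
  shows "\<exists>x. poly p x = 0"
proof -
  from cl n obtain x where x: "x ^ n + (\<Sum>j<n. coeff p j * x ^ j) = 0"
    unfolding alg_closed_field_def by blast
  have "poly p x = (\<Sum>i\<le>degree p. coeff p i * x ^ i)" by (rule poly_altdef)
  also have "\<dots> = (\<Sum>j<n. coeff p j * x ^ j) + coeff p n * x ^ n" using deg by (simp add: lessThan_Suc_atMost[symmetric])
  also have "\<dots> = 0" using x deg by (simp add: add.commute)
  finally show ?thesis by blast
qed

lemma eigen_exists:
  fixes A :: "'k::field mat"
  assumes cl: "alg_closed_field TYPE('k)" and A: "A \<in> carrier_mat n n" and n: "n > 0"
  shows "\<exists>c v. v \<in> carrier_vec n \<and> v \<noteq> 0\<^sub>v n \<and> A *\<^sub>v v = c \<cdot>\<^sub>v v"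
proof -
  obtain c where "poly (char_poly A) c = 0"
    using alg_closed_root[OF cl _ _ n] degree_monic_char_poly[OF A] by blast
  hence "eigenvalue A c" using eigenvalue_root_char_poly[OF A] by simp
  then obtain v where "eigenvector A v c" unfolding eigenvalue_def by blast
  thus ?thesis unfolding eigenvector_def using A by auto
qed



lemma ring_inv_eq:
  fixes a :: "'e::ring_1"
  assumes "a * a' = 1" "a' * a = 1"
  shows "ring_inv a = a'"
  unfolding ring_inv_def
proof (rule the_equality)
  show "a * a' = 1 \<and> a' * a = 1" using assms by simp
  fix y assume y: "a * y = 1 \<and> y * a = 1"
  have "y = (a' * a) * y" using assms by simp
  also have "\<dots> = a' * (a * y)" by (simp add: mult.assoc)
  also have "\<dots> = a'" using y by simp
  finally show "y = a'" .
qed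

locale tga =
  fixes \<Gamma> :: "('g, 'h) monoid_scheme"
    and s :: "'k::field_char_0 \<Rightarrow> 'e::ring_1 \<Rightarrow> 'e"
    and Eg :: "'g \<Rightarrow> 'e set"
    and b :: "'g \<Rightarrow> 'e"
  assumes grp: "group \<Gamma>" and fin: "finite (carrier \<Gamma>)"
    and alg: "is_algebra s"
    and Eg_sub: "\<forall>x\<in>carrier \<Gamma>. module.subspace s (Eg x)"
    and Eg_dim: "\<forall>x\<in>carrier \<Gamma>. vector_space.dim s (Eg x) = 1"
    and Eg_dsum: "\<forall>e. \<exists>!f. (\<forall>x\<in>carrier \<Gamma>. f x \<in> Eg x) \<and> (\<forall>x. x \<notin> carrier \<Gamma> \<longrightarrow> f x = 0)
                          \<and> e = (\<Sum>x\<in>carrier \<Gamma>. f x)"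
    and Eg_mult: "\<forall>x\<in>carrier \<Gamma>. \<forall>y\<in>carrier \<Gamma>.
                    {u * v | u v. u \<in> Eg x \<and> v \<in> Eg y} = Eg (x \<otimes>\<^bsub>\<Gamma>\<^esub> y)"
    and b_in: "\<forall>x\<in>carrier \<Gamma>. b x \<in> Eg x \<and> b x \<noteq> 0"
begin

abbreviation G where "G \<equiv> carrier \<Gamma>"

sublocale V: vector_space s using alg unfolding is_algebra_def by simp

interpretation Gr: group \<Gamma> by (rule grp)

lemma sml: "s c x * y = s c (x * y)" using alg unfolding is_algebra_def by metis
lemma smr: "x * s c y = s c (x * y)" using alg unfolding is_algebra_def by metis

lemma Eg_subspace: "x \<in> G \<Longrightarrow> V.subspace (Eg x)" using Eg_sub by auto

lemma bx: "x \<in> G \<Longrightarrow> b x \<in> Eg x" "x \<in> G \<Longrightarrow> b x \<noteq> 0" using b_in by auto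

lemma Eg_eq: assumes x: "x \<in> G" shows "Eg x = range (\<lambda>c. s c (b x))"
proof -
  obtain B where B: "B \<subseteq> Eg x" "V.independent B" "Eg x \<subseteq> V.span B" "card B = V.dim (Eg x)"
    by (rule V.basis_exists)
  hence "card B = 1" using Eg_dim x by simp
  then obtain v where Bv: "B = {v}" by (auto simp: card_Suc_eq)
  have v0: "v \<noteq> 0" using B(2) Bv by simp
  have sp: "Eg x \<subseteq> range (\<lambda>k. s k v)" using B(3) Bv V.span_singleton by simp
  obtain c0 where c0: "b x = s c0 v" using sp bx[OF x] by auto
  have c00: "c0 \<noteq> 0" using c0 bx(2)[OF x] by auto
  show ?thesis
  proof
    show "Eg x \<subseteq> range (\<lambda>c. s c (b x))"
    proof
      fix y assume "y \<in> Eg x"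
      then obtain k where k: "y = s k v" using sp by auto
      have "y = s (k / c0) (b x)" using c00 by (simp add: k c0)
      thus "y \<in> range (\<lambda>c. s c (b x))" by blast
    qed
    show "range (\<lambda>c. s c (b x)) \<subseteq> Eg x"
      using Eg_subspace[OF x] bx[OF x] by (auto simp: V.subspace_def)
  qed
qed

lemma Eg_mul: "x \<in> G \<Longrightarrow> y \<in> G \<Longrightarrow> u \<in> Eg x \<Longrightarrow> v \<in> Eg y \<Longrightarrow> u * v \<in> Eg (x \<otimes>\<^bsub>\<Gamma>\<^esub> y)"
  using Eg_mult by blast

lemma Eg_zero: "x \<in> G \<Longrightarrow> 0 \<in> Eg x"
  using Eg_subspace by (auto simp: V.subspace_def)

lemma bb_nz: assumes x: "x \<in> G" and y: "y \<in> G" shows "b x * b y \<noteq> 0"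
proof
  assume 0: "b x * b y = 0"
  have "b (x \<otimes>\<^bsub>\<Gamma>\<^esub> y) \<in> {u * v | u v. u \<in> Eg x \<and> v \<in> Eg y}"
    using Eg_mult x y bx[of "x \<otimes>\<^bsub>\<Gamma>\<^esub> y"] by auto
  then obtain u v where uv: "b (x \<otimes>\<^bsub>\<Gamma>\<^esub> y) = u * v" "u \<in> Eg x" "v \<in> Eg y" by blast
  obtain c d where "u = s c (b x)" "v = s d (b y)" using uv Eg_eq x y by auto
  hence "u * v = s c (s d (b x * b y))" by (simp add: sml smr)
  hence "b (x \<otimes>\<^bsub>\<Gamma>\<^esub> y) = 0" using uv 0 by simp
  thus False using bx x y by auto
qed

lemma bb: assumes x: "x \<in> G" and y: "y \<in> G" shows "\<exists>c. c \<noteq> 0 \<and> b x * b y = s c (b (x \<otimes>\<^bsub>\<Gamma>\<^esub> y))"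
proof -
  have "b x * b y \<in> Eg (x \<otimes>\<^bsub>\<Gamma>\<^esub> y)" using Eg_mul x y bx by auto
  then obtain c where c: "b x * b y = s c (b (x \<otimes>\<^bsub>\<Gamma>\<^esub> y))" using Eg_eq x y by auto
  hence "c \<noteq> 0" using bb_nz x y by auto
  thus ?thesis using c by blast
qed

lemma DU:
  assumes f: "\<And>x. x \<in> G \<Longrightarrow> f x \<in> Eg x" and g: "\<And>x. x \<in> G \<Longrightarrow> g x \<in> Eg x"
    and eq: "(\<Sum>x\<in>G. f x) = (\<Sum>x\<in>G. g x)" and x: "x \<in> G"
  shows "f x = g x"
proof -
  define f' where "f' x = (if x \<in> G then f x else 0)" for x
  define g' where "g' x = (if x \<in> G then g x else 0)" for x
  let ?P = "\<lambda>h. (\<forall>x\<in>G. h x \<in> Eg x) \<and> (\<forall>x. x \<notin> G \<longrightarrow> h x = 0) \<and> (\<Sum>x\<in>G. f x) = (\<Sum>x\<in>G. h x)"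
  have "?P f'" using f by (auto simp: f'_def)
  moreover have "?P g'" using g eq by (auto simp: g'_def)
  ultimately have "f' = g'" using Eg_dsum by blast
  thus ?thesis using x by (metis f'_def g'_def)
qed

definition BS where "BS = b ` G"

lemma b_inj: "inj_on b G"
proof
  fix x y assume x: "x \<in> G" and y: "y \<in> G" and e: "b x = b y"
  show "x = y"
  proof (rule ccontr)
    assume xy: "x \<noteq> y"
    define f where "f z = (if z = x then b x else 0)" for z
    define g where "g z = (if z = y then b x else 0)" for z
    have "f x = g x"
    proof (rule DU[OF _ _ _ x])
      show "f z \<in> Eg z" if "z \<in> G" for z using that bx Eg_zero by (auto simp: f_def)
      show "g z \<in> Eg z" if "z \<in> G" for z using that bx Eg_zero e by (auto simp: g_def)
      show "sum f G = sum g G" using x y fin by (simp add: f_def g_def)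
    qed
    thus False using xy bx x by (simp add: f_def g_def)
  qed
qed

lemma BS_finite: "finite BS" unfolding BS_def using fin by simp

lemma BS_indep: "V.independent BS"
proof (rule V.independent_if_scalars_zero[OF BS_finite])
  fix f v assume sum0: "(\<Sum>x\<in>BS. s (f x) x) = 0" and v: "v \<in> BS"
  then obtain x where x: "x \<in> G" "v = b x" unfolding BS_def by auto
  have "(\<Sum>x\<in>G. s (f (b x)) (b x)) = 0" using sum0 b_inj unfolding BS_def by (simp add: sum.reindex)
  hence "s (f (b x)) (b x) = (\<lambda>_. 0) x"
  proof (intro DU[of "\<lambda>z. s (f (b z)) (b z)" "\<lambda>_. 0", OF _ _ _ x(1)])
    show "s (f (b z)) (b z) \<in> Eg z" if "z \<in> G" for z by (subst Eg_eq[OF that]) auto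
    show "(\<lambda>_. 0) z \<in> Eg z" if "z \<in> G" for z by (simp add: Eg_zero that)
  qed simp
  thus "f v = 0" using x bx by simp
qed

lemma decomp: fixes e :: 'e obtains f where "\<And>x. x \<in> G \<Longrightarrow> f x \<in> Eg x" "e = (\<Sum>x\<in>G. f x)"
proof -
  have "\<exists>f. (\<forall>x\<in>G. f x \<in> Eg x) \<and> (\<forall>x. x \<notin> G \<longrightarrow> f x = 0) \<and> e = (\<Sum>x\<in>G. f x)"
    using Eg_dsum[rule_format, of e] by (rule ex1_implies_ex)
  then obtain f where "(\<forall>x\<in>G. f x \<in> Eg x)" "e = (\<Sum>x\<in>G. f x)" by blast
  thus ?thesis using that by blast
qed

lemma BS_span: "V.span BS = UNIV"
proof -
  have "e \<in> V.span BS" for e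
  proof -
    obtain f where f: "\<And>x. x \<in> G \<Longrightarrow> f x \<in> Eg x" "e = (\<Sum>x\<in>G. f x)" using decomp[of e] by blast
    have "f x \<in> V.span BS" if x: "x \<in> G" for x
    proof -
      obtain c where "f x = s c (b x)" using f(1)[OF x] Eg_eq[OF x] by auto
      moreover have "b x \<in> V.span BS" using x by (auto simp: BS_def intro!: V.span_base)
      ultimately show ?thesis by (simp add: V.span_scale)
    qed
    thus ?thesis using f(2) by (auto intro: V.span_sum)
  qed
  thus ?thesis by auto
qed

sublocale FD: finite_dimensional_vector_space s BS
  by unfold_locales (rule BS_finite, rule BS_indep, rule BS_span)


lemma one_G[simp]: "\<one>\<^bsub>\<Gamma>\<^esub> \<in> G" by simp

lemma grp_eq1: "x \<in> G \<Longrightarrow> y \<in> G \<Longrightarrow> y \<otimes>\<^bsub>\<Gamma>\<^esub> inv\<^bsub>\<Gamma>\<^esub> x = \<one>\<^bsub>\<Gamma>\<^esub> \<longleftrightarrow> y = x"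
  by (metis Gr.inv_closed Gr.inv_equality Gr.inv_inv Gr.r_inv)

lemma grp_eq2: "x \<in> G \<Longrightarrow> y \<in> G \<Longrightarrow> y \<otimes>\<^bsub>\<Gamma>\<^esub> x = \<one>\<^bsub>\<Gamma>\<^esub> \<longleftrightarrow> x = inv\<^bsub>\<Gamma>\<^esub> y"
  by (metis Gr.inv_equality Gr.r_inv)

lemma bij_mult: "y \<in> G \<Longrightarrow> bij_betw (\<lambda>x. y \<otimes>\<^bsub>\<Gamma>\<^esub> x) G G"
  unfolding bij_betw_def
proof
  assume y: "y \<in> G"
  show "inj_on (\<lambda>x. y \<otimes>\<^bsub>\<Gamma>\<^esub> x) G" by (rule Gr.inj_on_cmult[OF y])
  show "(\<lambda>x. y \<otimes>\<^bsub>\<Gamma>\<^esub> x) ` G = G"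
  proof
    show "(\<lambda>x. y \<otimes>\<^bsub>\<Gamma>\<^esub> x) ` G \<subseteq> G" using y by auto
    show "G \<subseteq> (\<lambda>x. y \<otimes>\<^bsub>\<Gamma>\<^esub> x) ` G"
    proof
      fix z assume z: "z \<in> G"
      have "z = y \<otimes>\<^bsub>\<Gamma>\<^esub> (inv\<^bsub>\<Gamma>\<^esub> y \<otimes>\<^bsub>\<Gamma>\<^esub> z)" using y z by (simp add: Gr.m_assoc[symmetric])
      thus "z \<in> (\<lambda>x. y \<otimes>\<^bsub>\<Gamma>\<^esub> x) ` G" using y z by blast
    qed
  qed
qed

abbreviation R where "R \<equiv> V.representation BS"

lemma R_b: "x \<in> G \<Longrightarrow> R (b x) = (\<lambda>v. if v = b x then 1 else 0)"
  using V.representation_basis[OF BS_indep] by (simp add: BS_def)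
lemma R_add: "R (u + v) z = R u z + R v z"
  using V.representation_add[OF BS_indep] BS_span by simp
lemma R_scale: "R (s c u) z = c * R u z"
  using V.representation_scale[OF BS_indep] BS_span by simp
lemma R_sum: "R (sum f A) z = (\<Sum>i\<in>A. R (f i) z)"
  using V.representation_sum[OF BS_indep, of A f] BS_span by simp
lemma R_sb: "x \<in> G \<Longrightarrow> y \<in> G \<Longrightarrow> R (s c (b x)) (b y) = (if y = x then c else 0)"
  using R_scale R_b b_inj by (auto simp: inj_on_def)

lemma one_in: "1 \<in> Eg \<one>\<^bsub>\<Gamma>\<^esub>"
proof -
  obtain f where f: "\<And>x. x \<in> G \<Longrightarrow> f x \<in> Eg x" "1 = sum f G" using decomp[of 1] by blast
  have one: "\<one>\<^bsub>\<Gamma>\<^esub> \<in> G" by simp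
  have fz: "f x = 0" if x: "x \<in> G" "x \<noteq> \<one>\<^bsub>\<Gamma>\<^esub>" for x
  proof -
    have "(\<lambda>z. f z * b \<one>\<^bsub>\<Gamma>\<^esub>) x = (\<lambda>z. if z = \<one>\<^bsub>\<Gamma>\<^esub> then b \<one>\<^bsub>\<Gamma>\<^esub> else 0) x"
    proof (rule DU[of "\<lambda>z. f z * b \<one>\<^bsub>\<Gamma>\<^esub>" "\<lambda>z. if z = \<one>\<^bsub>\<Gamma>\<^esub> then b \<one>\<^bsub>\<Gamma>\<^esub> else 0", OF _ _ _ x(1)])
      show "f z * b \<one>\<^bsub>\<Gamma>\<^esub> \<in> Eg z" if z: "z \<in> G" for z
        using Eg_mul[OF z one f(1)[OF z] bx(1)[OF one]] z by simp
      show "(if z = \<one>\<^bsub>\<Gamma>\<^esub> then b \<one>\<^bsub>\<Gamma>\<^esub> else 0) \<in> Eg z" if z: "z \<in> G" for z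
        using bx Eg_zero z by auto
      have "(\<Sum>z\<in>G. f z * b \<one>\<^bsub>\<Gamma>\<^esub>) = (\<Sum>z\<in>G. f z) * b \<one>\<^bsub>\<Gamma>\<^esub>" by (simp add: sum_distrib_right)
      also have "\<dots> = b \<one>\<^bsub>\<Gamma>\<^esub>" using f(2)[symmetric] by simp
      finally show "(\<Sum>z\<in>G. f z * b \<one>\<^bsub>\<Gamma>\<^esub>) = (\<Sum>z\<in>G. if z = \<one>\<^bsub>\<Gamma>\<^esub> then b \<one>\<^bsub>\<Gamma>\<^esub> else 0)"
        using one fin by simp
    qed
    hence "f x * b \<one>\<^bsub>\<Gamma>\<^esub> = 0" using x by simp
    moreover obtain c where "f x = s c (b x)" using f(1)[OF x(1)] Eg_eq[OF x(1)] by auto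
    ultimately show ?thesis using bb_nz[OF x(1) one] by (simp add: sml)
  qed
  have "sum f G = (\<Sum>z\<in>G. if z = \<one>\<^bsub>\<Gamma>\<^esub> then f \<one>\<^bsub>\<Gamma>\<^esub> else 0)"
    by (rule sum.cong) (use fz in auto)
  also have "\<dots> = f \<one>\<^bsub>\<Gamma>\<^esub>" using fin by simp
  finally have "1 = f \<one>\<^bsub>\<Gamma>\<^esub>" using f(2) by simp
  thus ?thesis using f(1)[OF one] by simp
qed

definition tau where "tau e = R e (b \<one>\<^bsub>\<Gamma>\<^esub>) / R 1 (b \<one>\<^bsub>\<Gamma>\<^esub>)"

lemma one_eq: obtains c1 where "c1 \<noteq> 0" "1 = s c1 (b \<one>\<^bsub>\<Gamma>\<^esub>)" "R 1 (b \<one>\<^bsub>\<Gamma>\<^esub>) = c1"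
proof -
  obtain c where c: "1 = s c (b \<one>\<^bsub>\<Gamma>\<^esub>)" using one_in Eg_eq[OF one_G] by auto
  hence "c \<noteq> 0" by (metis V.scale_zero_left zero_neq_one)
  moreover have "R 1 (b \<one>\<^bsub>\<Gamma>\<^esub>) = c" by (subst c) (simp add: R_sb)
  ultimately show ?thesis using that c by blast
qed

lemma tau_add: "tau (u + v) = tau u + tau v" unfolding tau_def by (simp add: R_add add_divide_distrib)
lemma tau_scale: "tau (s c u) = c * tau u" unfolding tau_def by (simp add: R_scale)
lemma tau_sum: "tau (sum f A) = (\<Sum>i\<in>A. tau (f i))" unfolding tau_def by (simp add: R_sum sum_divide_distrib)
lemma tau_zero: "tau 0 = 0" using tau_scale[of 0 0] by simp

lemma tau_hom0: assumes x: "x \<in> G" "x \<noteq> \<one>\<^bsub>\<Gamma>\<^esub>" and a: "a \<in> Eg x" shows "tau a = 0"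
proof -
  obtain c where "a = s c (b x)" using a Eg_eq[OF x(1)] by auto
  thus ?thesis unfolding tau_def using x by (simp add: R_sb)
qed

lemma tau_grade1: assumes a: "a \<in> Eg \<one>\<^bsub>\<Gamma>\<^esub>" shows "a = s (tau a) 1"
proof -
  obtain c where c: "a = s c (b \<one>\<^bsub>\<Gamma>\<^esub>)" using a Eg_eq[OF one_G] by auto
  obtain c1 where c1: "c1 \<noteq> 0" "1 = s c1 (b \<one>\<^bsub>\<Gamma>\<^esub>)" "R 1 (b \<one>\<^bsub>\<Gamma>\<^esub>) = c1" by (rule one_eq)
  have "tau a = c / c1" unfolding tau_def using c c1 by (simp add: R_sb)
  hence "s (tau a) 1 = s (c / c1) (s c1 (b \<one>\<^bsub>\<Gamma>\<^esub>))" using c1(2) by simp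
  also have "\<dots> = s (c / c1 * c1) (b \<one>\<^bsub>\<Gamma>\<^esub>)" by (simp add: V.scale_scale)
  finally have "s (tau a) 1 = s (c / c1 * c1) (b \<one>\<^bsub>\<Gamma>\<^esub>)" .
  thus ?thesis using c c1 by simp
qed

lemma tau_1: "tau 1 = 1"
proof -
  obtain c1 where c1: "c1 \<noteq> 0" "1 = s c1 (b \<one>\<^bsub>\<Gamma>\<^esub>)" "R 1 (b \<one>\<^bsub>\<Gamma>\<^esub>) = c1" by (rule one_eq)
  thus ?thesis unfolding tau_def by simp
qed

end

context tga begin

interpretation Gr: group \<Gamma> by (rule grp)

definition hu where "hu a x \<longleftrightarrow> x \<in> G \<and> a \<in> Eg x \<and> a \<noteq> 0"

lemma hu_b: "x \<in> G \<Longrightarrow> hu (b x) x" using bx unfolding hu_def by auto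

lemma hu_sb: "hu a x \<Longrightarrow> \<exists>c. c \<noteq> 0 \<and> a = s c (b x)"
  unfolding hu_def using Eg_eq by fastforce

lemma Eg_scale: "x \<in> G \<Longrightarrow> a \<in> Eg x \<Longrightarrow> s c a \<in> Eg x"
  using Eg_subspace by (auto simp: V.subspace_def)

lemma b_inv: assumes x: "x \<in> G"
  shows "\<exists>r \<in> Eg (inv\<^bsub>\<Gamma>\<^esub> x). b x * r = 1 \<and> r * b x = 1"
proof -
  define y where "y = inv\<^bsub>\<Gamma>\<^esub> x"
  have y: "y \<in> G" using x by (simp add: y_def)
  define p where "p = b x * b y"
  define q where "q = b y * b x"
  have pE: "p \<in> Eg \<one>\<^bsub>\<Gamma>\<^esub>" using Eg_mul[OF x y bx(1)[OF x] bx(1)[OF y]] x by (simp add: p_def y_def)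
  have qE: "q \<in> Eg \<one>\<^bsub>\<Gamma>\<^esub>" using Eg_mul[OF y x bx(1)[OF y] bx(1)[OF x]] x by (simp add: q_def y_def)
  have p: "p = s (tau p) 1" by (rule tau_grade1[OF pE])
  have q: "q = s (tau q) 1" by (rule tau_grade1[OF qE])
  have tp: "tau p \<noteq> 0" using p bb_nz[OF x y] by (metis V.scale_zero_left p_def)
  have tq: "tau q \<noteq> 0" using q bb_nz[OF y x] by (metis V.scale_zero_left q_def)
  define r where "r = s (1 / tau p) (b y)"
  define l where "l = s (1 / tau q) (b y)"
  have xr: "b x * r = 1"
  proof -
    have "b x * r = s (1 / tau p) p" by (simp add: r_def p_def smr)
    also have "\<dots> = s (1 / tau p) (s (tau p) 1)" using p by simp
    also have "\<dots> = 1" using tp by (simp add: V.scale_scale)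
    finally show ?thesis .
  qed
  have lx: "l * b x = 1"
  proof -
    have "l * b x = s (1 / tau q) q" by (simp add: l_def q_def sml)
    also have "\<dots> = s (1 / tau q) (s (tau q) 1)" using q by simp
    also have "\<dots> = 1" using tq by (simp add: V.scale_scale)
    finally show ?thesis .
  qed
  have "l = l * (b x * r)" using xr by simp
  also have "\<dots> = (l * b x) * r" by (simp add: mult.assoc)
  also have "\<dots> = r" using lx by simp
  finally have "r * b x = 1" using lx by simp
  moreover have "r \<in> Eg y" unfolding r_def by (rule Eg_scale[OF y bx(1)[OF y]])
  ultimately show ?thesis using xr y_def by blast
qed

lemma hu_inv: assumes a: "hu a x"
  shows "a * ring_inv a = 1" "ring_inv a * a = 1" "hu (ring_inv a) (inv\<^bsub>\<Gamma>\<^esub> x)"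
proof -
  obtain c where c: "c \<noteq> 0" "a = s c (b x)" using hu_sb[OF a] by blast
  have x: "x \<in> G" using a hu_def by simp
  obtain r where r: "r \<in> Eg (inv\<^bsub>\<Gamma>\<^esub> x)" "b x * r = 1" "r * b x = 1" using b_inv[OF x] by blast
  define a' where "a' = s (1 / c) r"
  have 1: "a * a' = 1" using c r by (simp add: a'_def sml smr V.scale_scale)
  have 2: "a' * a = 1" using c r by (simp add: a'_def sml smr V.scale_scale)
  have ri: "ring_inv a = a'" by (rule ring_inv_eq[OF 1 2])
  show "a * ring_inv a = 1" "ring_inv a * a = 1" using 1 2 ri by simp_all
  have "a' \<noteq> 0" using 1 by auto
  moreover have "a' \<in> Eg (inv\<^bsub>\<Gamma>\<^esub> x)" unfolding a'_def using r x by (intro Eg_scale) auto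
  ultimately show "hu (ring_inv a) (inv\<^bsub>\<Gamma>\<^esub> x)" unfolding hu_def using ri x by simp
qed

lemma hu_mult: assumes a: "hu a x" and a': "hu a' y" shows "hu (a * a') (x \<otimes>\<^bsub>\<Gamma>\<^esub> y)"
proof -
  have x: "x \<in> G" and y: "y \<in> G" using a a' hu_def by auto
  have "a * a' * (ring_inv a' * ring_inv a) = a * (a' * ring_inv a') * ring_inv a" by (simp add: mult.assoc)
  also have "\<dots> = 1" using hu_inv[OF a] hu_inv[OF a'] by simp
  finally have "a * a' \<noteq> 0" by auto
  thus ?thesis using Eg_mul[OF x y] a a' x y unfolding hu_def by auto
qed

lemma hu_scale: "hu a x \<Longrightarrow> c \<noteq> 0 \<Longrightarrow> hu (s c a) x"
  unfolding hu_def using Eg_scale by auto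

lemma ring_inv_scale: assumes a: "hu a x" and c: "c \<noteq> 0"
  shows "ring_inv (s c a) = s (inverse c) (ring_inv a)"
  by (rule ring_inv_eq) (use hu_inv[OF a] c in \<open>simp_all add: sml smr V.scale_scale\<close>)

lemma ring_inv_mult: assumes a: "hu a x" and a': "hu a' y"
  shows "ring_inv (a * a') = ring_inv a' * ring_inv a"
proof (rule ring_inv_eq)
  have "a * a' * (ring_inv a' * ring_inv a) = a * (a' * ring_inv a') * ring_inv a" by (simp add: mult.assoc)
  also have "\<dots> = 1" using hu_inv[OF a] hu_inv[OF a'] by simp
  finally show "a * a' * (ring_inv a' * ring_inv a) = 1" .
  have "ring_inv a' * ring_inv a * (a * a') = ring_inv a' * (ring_inv a * a) * a'" by (simp add: mult.assoc)
  also have "\<dots> = 1" using hu_inv[OF a] hu_inv[OF a'] by simp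
  finally show "ring_inv a' * ring_inv a * (a * a') = 1" .
qed

lemma RI:
  fixes F :: "'e \<Rightarrow> 'e \<Rightarrow> 'a::comm_monoid_add"
  assumes F: "\<And>c u u'. c \<noteq> 0 \<Longrightarrow> F (s c u) (s (inverse c) u') = F u u'" and y: "y \<in> G"
  shows "(\<Sum>x\<in>G. F (b y * b x) (ring_inv (b y * b x))) = (\<Sum>x\<in>G. F (b x) (ring_inv (b x)))"
proof -
  have "F (b y * b x) (ring_inv (b y * b x)) = (\<lambda>z. F (b z) (ring_inv (b z))) (y \<otimes>\<^bsub>\<Gamma>\<^esub> x)" if x: "x \<in> G" for x
  proof -
    obtain c where c: "c \<noteq> 0" "b y * b x = s c (b (y \<otimes>\<^bsub>\<Gamma>\<^esub> x))" using bb[OF y x] by blast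
    have "ring_inv (b y * b x) = s (inverse c) (ring_inv (b (y \<otimes>\<^bsub>\<Gamma>\<^esub> x)))"
      using c ring_inv_scale[OF hu_b[of "y \<otimes>\<^bsub>\<Gamma>\<^esub> x"] c(1)] y x by simp
    thus ?thesis using c F by simp
  qed
  hence "(\<Sum>x\<in>G. F (b y * b x) (ring_inv (b y * b x))) = (\<Sum>x\<in>G. (\<lambda>z. F (b z) (ring_inv (b z))) (y \<otimes>\<^bsub>\<Gamma>\<^esub> x))"
    by (intro sum.cong) auto
  also have "\<dots> = (\<Sum>z\<in>G. F (b z) (ring_inv (b z)))" by (rule sum.reindex_bij_betw[OF bij_mult[OF y]])
  finally show ?thesis .
qed

lemma span_all: assumes P: "V.subspace {x. P x}" and b: "\<And>x. x \<in> G \<Longrightarrow> P (b x)" shows "P e"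
proof -
  have "e \<in> V.span BS" using BS_span by simp
  thus ?thesis by (rule V.span_induct) (use P b in \<open>auto simp: BS_def\<close>)
qed

lemma subspace_expansion:
  assumes add: "\<And>x u v. \<phi> x (u + v) = \<phi> x u + \<phi> x v" and sc: "\<And>x c u. \<phi> x (s c u) = c * \<phi> x u"
  shows "V.subspace {e. e = (\<Sum>x\<in>G. s (\<phi> x e) (w x))}"
proof -
  have z: "\<phi> x 0 = 0" for x using sc[of x 0 0] by simp
  have "u + v = (\<Sum>x\<in>G. s (\<phi> x (u + v)) (w x))"
    if u: "u = (\<Sum>x\<in>G. s (\<phi> x u) (w x))" and v: "v = (\<Sum>x\<in>G. s (\<phi> x v) (w x))" for u v
  proof -
    have "u + v = (\<Sum>x\<in>G. s (\<phi> x u) (w x)) + (\<Sum>x\<in>G. s (\<phi> x v) (w x))" using u v by simp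
    also have "\<dots> = (\<Sum>x\<in>G. s (\<phi> x (u + v)) (w x))"
      by (simp add: add sum.distrib[symmetric] V.scale_left_distrib)
    finally show ?thesis .
  qed
  moreover have "s c u = (\<Sum>x\<in>G. s (\<phi> x (s c u)) (w x))" if u: "u = (\<Sum>x\<in>G. s (\<phi> x u) (w x))" for u c
  proof -
    have "s c u = s c (\<Sum>x\<in>G. s (\<phi> x u) (w x))" using u by simp
    also have "\<dots> = (\<Sum>x\<in>G. s (\<phi> x (s c u)) (w x))"
      by (simp add: sc V.scale_sum_right V.scale_scale)
    finally show ?thesis .
  qed
  ultimately show ?thesis unfolding V.subspace_def by (auto simp: z)
qed

lemma D1: "e = (\<Sum>x\<in>G. s (tau (e * b x)) (ring_inv (b x)))"
proof (rule span_all[where P="\<lambda>e. e = (\<Sum>x\<in>G. s (tau (e * b x)) (ring_inv (b x)))"])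
  show "V.subspace {e. e = (\<Sum>x\<in>G. s (tau (e * b x)) (ring_inv (b x)))}"
    by (rule subspace_expansion) (simp_all add: tau_add tau_scale distrib_right sml)
  fix y assume y: "y \<in> G"
  let ?iy = "inv\<^bsub>\<Gamma>\<^esub> y"
  have iy: "?iy \<in> G" using y by simp
  have t: "tau (b y * b x) = 0" if x: "x \<in> G" "x \<noteq> ?iy" for x
  proof (rule tau_hom0)
    show "y \<otimes>\<^bsub>\<Gamma>\<^esub> x \<in> G" "y \<otimes>\<^bsub>\<Gamma>\<^esub> x \<noteq> \<one>\<^bsub>\<Gamma>\<^esub>" using x y grp_eq2 by auto
    show "b y * b x \<in> Eg (y \<otimes>\<^bsub>\<Gamma>\<^esub> x)" using Eg_mul[OF y x(1) bx(1)[OF y] bx(1)[OF x(1)]] .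
  qed
  have "(\<Sum>x\<in>G. s (tau (b y * b x)) (ring_inv (b x))) = (\<Sum>x\<in>G. if x = ?iy then s (tau (b y * b ?iy)) (ring_inv (b ?iy)) else 0)"
    by (rule sum.cong) (use t in auto)
  also have "\<dots> = s (tau (b y * b ?iy)) (ring_inv (b ?iy))" using iy fin by simp
  also have "\<dots> = b y"
  proof -
    have E1: "b y * b ?iy \<in> Eg \<one>\<^bsub>\<Gamma>\<^esub>" using Eg_mul[OF y iy bx(1)[OF y] bx(1)[OF iy]] y by simp
    have "b y = b y * b ?iy * ring_inv (b ?iy)" using hu_inv(1)[OF hu_b[OF iy]] by (simp add: mult.assoc)
    also have "\<dots> = s (tau (b y * b ?iy)) 1 * ring_inv (b ?iy)" using tau_grade1[OF E1] by simp
    finally show ?thesis by (simp add: sml)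
  qed
  finally show "b y = (\<Sum>x\<in>G. s (tau (b y * b x)) (ring_inv (b x)))" by simp
qed

lemma D2: "e = (\<Sum>x\<in>G. s (tau (e * ring_inv (b x))) (b x))"
proof (rule span_all[where P="\<lambda>e. e = (\<Sum>x\<in>G. s (tau (e * ring_inv (b x))) (b x))"])
  show "V.subspace {e. e = (\<Sum>x\<in>G. s (tau (e * ring_inv (b x))) (b x))}"
    by (rule subspace_expansion) (simp_all add: tau_add tau_scale distrib_right sml)
  fix y assume y: "y \<in> G"
  have t: "tau (b y * ring_inv (b x)) = 0" if x: "x \<in> G" "x \<noteq> y" for x
  proof (rule tau_hom0)
    show "y \<otimes>\<^bsub>\<Gamma>\<^esub> inv\<^bsub>\<Gamma>\<^esub> x \<in> G" "y \<otimes>\<^bsub>\<Gamma>\<^esub> inv\<^bsub>\<Gamma>\<^esub> x \<noteq> \<one>\<^bsub>\<Gamma>\<^esub>" using x y grp_eq1 by auto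
    show "b y * ring_inv (b x) \<in> Eg (y \<otimes>\<^bsub>\<Gamma>\<^esub> inv\<^bsub>\<Gamma>\<^esub> x)"
      using Eg_mul[OF y _ bx(1)[OF y]] hu_inv(3)[OF hu_b[OF x(1)]] x(1) unfolding hu_def by auto
  qed
  have "(\<Sum>x\<in>G. s (tau (b y * ring_inv (b x))) (b x)) = (\<Sum>x\<in>G. if x = y then s (tau (b y * ring_inv (b y))) (b y) else 0)"
    by (rule sum.cong) (use t in auto)
  also have "\<dots> = b y" using y fin hu_inv(1)[OF hu_b[OF y]] by (simp add: tau_1)
  finally show "b y = (\<Sum>x\<in>G. s (tau (b y * ring_inv (b x))) (b x))" by simp
qed


lemma lin_sum:
  assumes add: "\<And>u v. f (u + v) = f u + f v" and sc: "\<And>c u. f (s c u) = s c (f u)"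
  shows "f (sum g A) = (\<Sum>i\<in>A. f (g i))"
proof -
  have z: "f 0 = 0" using sc[of 0 0] by simp
  show ?thesis by (induction A rule: infinite_finite_induct) (simp_all add: add z)
qed

lemma TR:
  assumes add: "\<And>u v. f (u + v) = f u + f v" and sc: "\<And>c u. f (s c u) = s c (f u)"
  shows "lin_trace s UNIV f = (\<Sum>x\<in>G. tau (f (b x) * ring_inv (b x)))"
proof -
  define P where "P B \<longleftrightarrow> B \<subseteq> UNIV \<and> \<not> V.dependent B \<and> V.span B = UNIV" for B
  have "P BS" using BS_indep BS_span P_def by simp
  hence PB: "P (SOME B. P B)" by (rule someI)
  define B where "B = (SOME B. P B)"
  have "P B" using PB unfolding B_def .
  hence Bi: "V.independent B" and Bs: "V.span B = UNIV" unfolding P_def by auto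
  have Bf: "finite B" using FD.finiteI_independent[OF Bi] .
  have lt: "lin_trace s UNIV f = (\<Sum>v\<in>B. V.representation B (f v) v)"
    unfolding lin_trace_def Let_def B_def P_def by simp
  define \<phi> where "\<phi> x e = tau (e * ring_inv (b x))" for x e
  have \<phi>add: "\<phi> x (u + v) = \<phi> x u + \<phi> x v" for x u v by (simp add: \<phi>_def distrib_right tau_add)
  have \<phi>sc: "\<phi> x (s c u) = c * \<phi> x u" for x c u by (simp add: \<phi>_def sml tau_scale)
  have \<phi>sum: "\<phi> x (sum g A) = (\<Sum>i\<in>A. \<phi> x (g i))" for x g A
  proof -
    have z: "\<phi> x 0 = 0" by (simp add: \<phi>_def tau_zero)
    show ?thesis by (induction A rule: infinite_finite_induct) (simp_all add: \<phi>add z)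
  qed
  have Qsum: "V.representation B (sum g A) v = (\<Sum>i\<in>A. V.representation B (g i) v)" for g A v
    using V.representation_sum[OF Bi, of A g] Bs by simp
  have Qsc: "V.representation B (s c u) v = c * V.representation B u v" for c u v
    using V.representation_scale[OF Bi] Bs by simp
  have 1: "V.representation B (f v) v = (\<Sum>x\<in>G. \<phi> x v * V.representation B (f (b x)) v)" for v
  proof -
    have "f v = f (\<Sum>x\<in>G. s (\<phi> x v) (b x))" using D2[of v] unfolding \<phi>_def by simp
    also have "\<dots> = (\<Sum>x\<in>G. s (\<phi> x v) (f (b x)))" by (simp add: lin_sum[OF add sc] sc)
    finally show ?thesis by (simp add: Qsum Qsc)
  qed
  have 2: "(\<Sum>v\<in>B. V.representation B u v * \<phi> x v) = \<phi> x u" for u x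
  proof -
    have "(\<Sum>v\<in>B. V.representation B u v * \<phi> x v) = \<phi> x (\<Sum>v\<in>B. s (V.representation B u v) v)"
      by (simp add: \<phi>sum \<phi>sc)
    also have "(\<Sum>v\<in>B. s (V.representation B u v) v) = u"
      using V.sum_representation_eq[OF Bi _ Bf subset_refl] Bs by simp
    finally show ?thesis .
  qed
  have "lin_trace s UNIV f = (\<Sum>v\<in>B. \<Sum>x\<in>G. \<phi> x v * V.representation B (f (b x)) v)" using lt 1 by simp
  also have "\<dots> = (\<Sum>x\<in>G. \<Sum>v\<in>B. V.representation B (f (b x)) v * \<phi> x v)"
    by (subst sum.swap) (simp add: mult.commute)
  also have "\<dots> = (\<Sum>x\<in>G. \<phi> x (f (b x)))" by (simp add: 2)
  finally show ?thesis unfolding \<phi>_def .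
qed

end

context tga begin

interpretation Gr: group \<Gamma> by (rule grp)

lemma rep_props:
  assumes "is_rep s n \<rho>"
  shows "\<rho> e \<in> carrier_mat n n" "\<rho> (x + y) = \<rho> x + \<rho> y" "\<rho> (s c x) = c \<cdot>\<^sub>m \<rho> x"
    "\<rho> (x * y) = \<rho> x * \<rho> y" "\<rho> 1 = 1\<^sub>m n"
  using assms unfolding is_rep_def by auto

lemma rep_zero: assumes "is_rep s n \<rho>" shows "\<rho> 0 = 0\<^sub>m n n"
proof -
  have "\<rho> 0 = \<rho> (s 0 0)" by simp
  also have "\<dots> = 0 \<cdot>\<^sub>m \<rho> 0" by (rule rep_props(3)[OF assms])
  also have "\<dots> = 0\<^sub>m n n" using rep_props(1)[OF assms, of 0] by auto
  finally show ?thesis .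
qed

lemma lin_fun_sum:
  fixes h :: "'e \<Rightarrow> 'k"
  assumes add: "\<And>u v. h (u + v) = h u + h v" and sc: "\<And>c u. h (s c u) = c * h u"
  shows "h (sum g A) = (\<Sum>i\<in>A. h (g i))"
proof -
  have z: "h 0 = 0" using sc[of 0 0] by simp
  show ?thesis by (induction A rule: infinite_finite_induct) (simp_all add: add z)
qed

lemma rep_entry_sum:
  assumes r: "is_rep s n \<rho>" and p: "p < n" and q: "q < n"
  shows "\<rho> (sum g A) $$ (p,q) = (\<Sum>i\<in>A. \<rho> (g i) $$ (p,q))"
proof (rule lin_fun_sum[where h="\<lambda>e. \<rho> e $$ (p,q)"])
  show "\<rho> (u + v) $$ (p,q) = \<rho> u $$ (p,q) + \<rho> v $$ (p,q)" for u v
    using rep_props(1,2)[OF r] p q by (metis carrier_matD(1,2) index_add_mat(1))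
  show "\<rho> (s c u) $$ (p,q) = c * \<rho> u $$ (p,q)" for c u
    using rep_props(1,3)[OF r] p q by (metis carrier_matD(1,2) index_smult_mat(1))
qed

lemma trace_add: "A \<in> carrier_mat n n \<Longrightarrow> B \<in> carrier_mat n n \<Longrightarrow> mat_trace (A + B) = mat_trace A + (mat_trace B :: 'k)"
  unfolding mat_trace_def by (auto simp: sum.distrib[symmetric] intro!: sum.cong)

lemma rep_trace_sum:
  assumes r: "is_rep s n \<rho>"
  shows "mat_trace (\<rho> (sum g A)) = (\<Sum>i\<in>A. mat_trace (\<rho> (g i)))"
proof (rule lin_fun_sum[where h="\<lambda>e. mat_trace (\<rho> e)"])
  show "mat_trace (\<rho> (u + v)) = mat_trace (\<rho> u) + mat_trace (\<rho> v)" for u v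
    using rep_props(1,2)[OF r] trace_add by metis
  show "mat_trace (\<rho> (s c u)) = c * mat_trace (\<rho> u)" for c u
    using rep_props[OF r] trace_smult by metis
qed

lemma smult_smult_mat: "c \<cdot>\<^sub>m (d \<cdot>\<^sub>m (M :: 'k mat)) = (c * d) \<cdot>\<^sub>m M"
  by (rule eq_matI) (auto simp: mult.assoc)

lemma smult_prod3:
  fixes A X B :: "'k mat"
  assumes A: "A \<in> carrier_mat m m" and X: "X \<in> carrier_mat m n" and B: "B \<in> carrier_mat n n"
  shows "(c \<cdot>\<^sub>m A) * X * (d \<cdot>\<^sub>m B) = (c * d) \<cdot>\<^sub>m (A * X * B)"
proof -
  have "(c \<cdot>\<^sub>m A) * X = c \<cdot>\<^sub>m (A * X)" using A X by (rule mult_smult_assoc_mat)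
  moreover have "(c \<cdot>\<^sub>m (A * X)) * (d \<cdot>\<^sub>m B) = c \<cdot>\<^sub>m ((A * X) * (d \<cdot>\<^sub>m B))"
    using A X B by (intro mult_smult_assoc_mat) auto
  moreover have "(A * X) * (d \<cdot>\<^sub>m B) = d \<cdot>\<^sub>m (A * X * B)"
    using A X B by (intro mult_smult_distrib) auto
  ultimately show ?thesis by (simp add: smult_smult_mat)
qed

lemma IT:
  assumes sr: "is_rep s m \<sigma>" and rr: "is_rep s n \<rho>" and X: "X \<in> carrier_mat m n"
  shows "\<sigma> e * msum m n (\<lambda>x. \<sigma> (b x) * X * \<rho> (ring_inv (b x))) G
       = msum m n (\<lambda>x. \<sigma> (b x) * X * \<rho> (ring_inv (b x))) G * \<rho> e"
proof -
  define T where "T = msum m n (\<lambda>x. \<sigma> (b x) * X * \<rho> (ring_inv (b x))) G"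
  have Tc: "T \<in> carrier_mat m n" unfolding T_def by simp
  note sp = rep_props[OF sr] and rp = rep_props[OF rr]
  have "\<sigma> e * T = T * \<rho> e"
  proof (rule span_all[where P="\<lambda>e. \<sigma> e * T = T * \<rho> e"])
    show "V.subspace {e. \<sigma> e * T = T * \<rho> e}"
      unfolding V.subspace_def
    proof (intro conjI ballI allI; simp)
      show "\<sigma> 0 * T = T * \<rho> 0" using rep_zero[OF sr] rep_zero[OF rr] Tc by simp
      fix u v assume u: "\<sigma> u * T = T * \<rho> u" and v: "\<sigma> v * T = T * \<rho> v"
      show "\<sigma> (u + v) * T = T * \<rho> (u + v)"
        using u v sp(1)[of u] sp(1)[of v] rp(1)[of u] rp(1)[of v] Tc
        by (simp add: sp(2) rp(2) add_mult_distrib_mat mult_add_distrib_mat)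
    next
      fix c u assume u: "\<sigma> u * T = T * \<rho> u"
      show "\<sigma> (s c u) * T = T * \<rho> (s c u)"
        using u sp(1)[of u] rp(1)[of u] Tc
        by (simp add: sp(3) rp(3) mult_smult_assoc_mat mult_smult_distrib)
    qed
  next
    fix y assume y: "y \<in> G"
    define F' where "F' u u' = \<sigma> u * X * \<rho> u'" for u u'
    have F'c: "F' u u' \<in> carrier_mat m n" for u u' unfolding F'_def using sp(1) rp(1) X by (meson mult_carrier_mat)
    have 1: "\<sigma> (b y) * F' (b x) (ring_inv (b x)) = F' (b y * b x) (ring_inv (b y * b x)) * \<rho> (b y)"
      if x: "x \<in> G" for x
    proof -
      have ri: "ring_inv (b y * b x) * b y = ring_inv (b x)"
        using ring_inv_mult[OF hu_b[OF y] hu_b[OF x]] hu_inv(2)[OF hu_b[OF y]] by (simp add: mult.assoc)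
      have c1: "\<sigma> (b y) \<in> carrier_mat m m" "\<sigma> (b x) \<in> carrier_mat m m" "\<rho> (ring_inv (b x)) \<in> carrier_mat n n"
        using sp(1) rp(1) by auto
      have c2: "\<sigma> (b x) * X \<in> carrier_mat m n" using c1 X by (meson mult_carrier_mat)
      have "\<sigma> (b y) * F' (b x) (ring_inv (b x)) = (\<sigma> (b y) * (\<sigma> (b x) * X)) * \<rho> (ring_inv (b x))"
        unfolding F'_def by (rule assoc_mult_mat[symmetric, OF c1(1) c2 c1(3)])
      also have "\<sigma> (b y) * (\<sigma> (b x) * X) = \<sigma> (b y) * \<sigma> (b x) * X"
        by (rule assoc_mult_mat[symmetric, OF c1(1) c1(2) X])
      finally have "\<sigma> (b y) * F' (b x) (ring_inv (b x)) = \<sigma> (b y) * \<sigma> (b x) * X * \<rho> (ring_inv (b x))" .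
      also have "\<dots> = \<sigma> (b y * b x) * X * (\<rho> (ring_inv (b y * b x)) * \<rho> (b y))"
        using ri by (simp add: sp(4) rp(4)[symmetric])
      also have "\<dots> = F' (b y * b x) (ring_inv (b y * b x)) * \<rho> (b y)"
      proof -
        have "\<sigma> (b y * b x) * X \<in> carrier_mat m n" using sp(1) X by (meson mult_carrier_mat)
        thus ?thesis unfolding F'_def by (rule assoc_mult_mat[symmetric, OF _ rp(1) rp(1)])
      qed
      finally show ?thesis .
    qed
    have 2: "msum m n (\<lambda>x. F' (b y * b x) (ring_inv (b y * b x))) G = T"
    proof (rule eq_matI)
      fix p q assume "p < dim_row T" "q < dim_col T"
      hence p: "p < m" and q: "q < n" using Tc by auto
      have "(\<Sum>x\<in>G. F' (b y * b x) (ring_inv (b y * b x)) $$ (p,q)) = (\<Sum>x\<in>G. F' (b x) (ring_inv (b x)) $$ (p,q))"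
      proof (rule RI[OF _ y, where F="\<lambda>u u'. F' u u' $$ (p,q)"])
        fix c :: 'k and u u' assume c: "c \<noteq> 0"
        have "F' (s c u) (s (inverse c) u') = (c * inverse c) \<cdot>\<^sub>m F' u u'"
          unfolding F'_def sp(3) rp(3) by (rule smult_prod3[OF sp(1) X rp(1)])
        thus "F' (s c u) (s (inverse c) u') $$ (p,q) = F' u u' $$ (p,q)" using c F'c[of u u'] p q by simp
      qed
      thus "msum m n (\<lambda>x. F' (b y * b x) (ring_inv (b y * b x))) G $$ (p,q) = T $$ (p,q)"
        using p q unfolding T_def F'_def by simp
    qed (use Tc in auto)
    have "\<sigma> (b y) * T = msum m n (\<lambda>x. \<sigma> (b y) * F' (b x) (ring_inv (b x))) G"
      unfolding T_def F'_def[symmetric] by (rule mult_msum[OF sp(1) F'c])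
    also have "\<dots> = msum m n (\<lambda>x. F' (b y * b x) (ring_inv (b y * b x)) * \<rho> (b y)) G"
      unfolding msum_def using 1 by (intro cong_mat refl) (auto intro!: sum.cong)
    also have "\<dots> = msum m n (\<lambda>x. F' (b y * b x) (ring_inv (b y * b x))) G * \<rho> (b y)"
      by (rule msum_mult[symmetric, OF rp(1) F'c])
    also have "\<dots> = T * \<rho> (b y)" using 2 by simp
    finally show "\<sigma> (b y) * T = T * \<rho> (b y)" .
  qed
  thus ?thesis unfolding T_def .
qed


lemma simple_W:
  assumes r: "is_simple_rep s n \<rho>" and W: "W \<subseteq> carrier_vec n" "0\<^sub>v n \<in> W"
    "\<And>v u. v \<in> W \<Longrightarrow> u \<in> W \<Longrightarrow> v + u \<in> W" "\<And>c v. v \<in> W \<Longrightarrow> c \<cdot>\<^sub>v v \<in> W"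
    "\<And>e v. v \<in> W \<Longrightarrow> \<rho> e *\<^sub>v v \<in> W"
  shows "W = {0\<^sub>v n} \<or> W = carrier_vec n"
proof -
  have all: "\<forall>W \<subseteq> carrier_vec n.
        (0\<^sub>v n \<in> W \<and> (\<forall>v\<in>W. \<forall>u\<in>W. v + u \<in> W) \<and> (\<forall>c. \<forall>v\<in>W. c \<cdot>\<^sub>v v \<in> W) \<and>
         (\<forall>e. \<forall>v\<in>W. \<rho> e *\<^sub>v v \<in> W))
        \<longrightarrow> W = {0\<^sub>v n} \<or> W = carrier_vec n"
    using r unfolding is_simple_rep_def by (elim conjE)
  have "0\<^sub>v n \<in> W \<and> (\<forall>v\<in>W. \<forall>u\<in>W. v + u \<in> W) \<and> (\<forall>c. \<forall>v\<in>W. c \<cdot>\<^sub>v v \<in> W) \<and>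
         (\<forall>e. \<forall>v\<in>W. \<rho> e *\<^sub>v v \<in> W)" using W(2-5) by simp
  thus ?thesis using all W(1) by simp
qed

lemma simple_rep: "is_simple_rep s n \<rho> \<Longrightarrow> is_rep s n \<rho>" "is_simple_rep s n \<rho> \<Longrightarrow> n > 0"
  unfolding is_simple_rep_def by auto

lemma schur_scalar:
  assumes cl: "alg_closed_field TYPE('k)" and r: "is_simple_rep s n \<rho>" and A: "A \<in> carrier_mat n n"
    and comm: "\<And>e. A * \<rho> e = \<rho> e * A"
  shows "\<exists>c. A = c \<cdot>\<^sub>m 1\<^sub>m n"
proof -
  note rp = rep_props[OF simple_rep(1)[OF r]]
  obtain c v where v: "v \<in> carrier_vec n" "v \<noteq> 0\<^sub>v n" "A *\<^sub>v v = c \<cdot>\<^sub>v v"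
    using eigen_exists[OF cl A simple_rep(2)[OF r]] by blast
  define W where "W = {u \<in> carrier_vec n. A *\<^sub>v u = c \<cdot>\<^sub>v u}"
  have "W = {0\<^sub>v n} \<or> W = carrier_vec n"
  proof (rule simple_W[OF r])
    show "W \<subseteq> carrier_vec n" unfolding W_def by auto
    show "0\<^sub>v n \<in> W" unfolding W_def using A by (auto simp: mat_vec_zero intro!: eq_vecI)
    show "u + w \<in> W" if "u \<in> W" "w \<in> W" for u w
      using that A unfolding W_def by (auto simp: mult_add_distrib_mat_vec distrib_left intro!: eq_vecI)
    show "t \<cdot>\<^sub>v u \<in> W" if "u \<in> W" for t u
    proof -
      have u: "u \<in> carrier_vec n" "A *\<^sub>v u = c \<cdot>\<^sub>v u" using that W_def by auto
      have "A *\<^sub>v (t \<cdot>\<^sub>v u) = t \<cdot>\<^sub>v (c \<cdot>\<^sub>v u)" using mult_mat_vec[OF A u(1)] u(2) by simp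
      also have "\<dots> = c \<cdot>\<^sub>v (t \<cdot>\<^sub>v u)" by (rule eq_vecI) (simp_all add: ac_simps)
      finally show ?thesis using u unfolding W_def by simp
    qed
    show "\<rho> e *\<^sub>v u \<in> W" if "u \<in> W" for e u
    proof -
      have u: "u \<in> carrier_vec n" "A *\<^sub>v u = c \<cdot>\<^sub>v u" using that W_def by auto
      have "A *\<^sub>v (\<rho> e *\<^sub>v u) = (A * \<rho> e) *\<^sub>v u" by (rule assoc_mult_mat_vec[symmetric, OF A rp(1) u(1)])
      also have "\<dots> = \<rho> e *\<^sub>v (A *\<^sub>v u)" using comm[of e] assoc_mult_mat_vec[OF rp(1)[of e] A u(1)] by simp
      also have "\<dots> = c \<cdot>\<^sub>v (\<rho> e *\<^sub>v u)" using u(2) mult_mat_vec[OF rp(1) u(1)] by simp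
      finally show ?thesis using u mult_mat_vec_carrier[OF rp(1) u(1)] unfolding W_def by simp
    qed
  qed
  moreover have "v \<in> W" using v W_def by simp
  ultimately have W: "W = carrier_vec n" using v(2) by auto
  have "A = c \<cdot>\<^sub>m 1\<^sub>m n"
  proof (rule mat_eq_vecI[OF A])
    show "c \<cdot>\<^sub>m 1\<^sub>m n \<in> carrier_mat n n" by simp
    fix u :: "'k vec" assume u: "u \<in> carrier_vec n"
    hence "A *\<^sub>v u = c \<cdot>\<^sub>v u" using W W_def by auto
    thus "A *\<^sub>v u = (c \<cdot>\<^sub>m 1\<^sub>m n) *\<^sub>v u" using u smult_mat_vec[OF one_carrier_mat u, of c] by simp
  qed
  thus ?thesis by blast
qed

lemma schur_iso:
  assumes s1: "is_simple_rep s m \<sigma>" and s2: "is_simple_rep s n \<rho>" and T: "T \<in> carrier_mat m n"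
    and int: "\<And>e. \<sigma> e * T = T * \<rho> e" and nz: "T \<noteq> 0\<^sub>m m n"
  shows "m = n \<and> invertible_mat T"
proof -
  note sp = rep_props[OF simple_rep(1)[OF s1]] and rp = rep_props[OF simple_rep(1)[OF s2]]
  define K where "K = {v \<in> carrier_vec n. T *\<^sub>v v = 0\<^sub>v m}"
  have "K = {0\<^sub>v n} \<or> K = carrier_vec n"
  proof (rule simple_W[OF s2])
    show "K \<subseteq> carrier_vec n" unfolding K_def by auto
    show "0\<^sub>v n \<in> K" unfolding K_def using T by (simp add: mat_vec_zero)
    show "u + w \<in> K" if "u \<in> K" "w \<in> K" for u w
      using that T unfolding K_def by (simp add: mult_add_distrib_mat_vec)
    show "t \<cdot>\<^sub>v u \<in> K" if "u \<in> K" for t u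
      using that T unfolding K_def by (auto simp: mult_mat_vec intro!: eq_vecI)
    show "\<rho> e *\<^sub>v u \<in> K" if "u \<in> K" for e u
    proof -
      have u: "u \<in> carrier_vec n" "T *\<^sub>v u = 0\<^sub>v m" using that K_def by auto
      have "T *\<^sub>v (\<rho> e *\<^sub>v u) = (T * \<rho> e) *\<^sub>v u" by (rule assoc_mult_mat_vec[symmetric, OF T rp(1) u(1)])
      also have "\<dots> = \<sigma> e *\<^sub>v (T *\<^sub>v u)" using int[of e] assoc_mult_mat_vec[OF sp(1)[of e] T u(1)] by simp
      also have "\<dots> = 0\<^sub>v m" using u sp(1) by (simp add: mat_vec_zero)
      finally show ?thesis using u mult_mat_vec_carrier[OF rp(1) u(1)] unfolding K_def by simp
    qed
  qed
  moreover have "K \<noteq> carrier_vec n"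
  proof
    assume K: "K = carrier_vec n"
    have "T = 0\<^sub>m m n"
    proof (rule mat_eq_vecI[OF T])
      fix u :: "'k vec" assume u: "u \<in> carrier_vec n"
      thus "T *\<^sub>v u = 0\<^sub>m m n *\<^sub>v u" using K K_def by (auto simp: zero_mat_vec)
    qed simp
    thus False using nz by simp
  qed
  ultimately have K0: "K = {0\<^sub>v n}" by simp
  have inj: "v = 0\<^sub>v n" if "v \<in> carrier_vec n" "T *\<^sub>v v = 0\<^sub>v m" for v
    using that K0 K_def by blast
  define I where "I = (\<lambda>v. T *\<^sub>v v) ` carrier_vec n"
  have "I = {0\<^sub>v m} \<or> I = carrier_vec m"
  proof (rule simple_W[OF s1])
    show "I \<subseteq> carrier_vec m" unfolding I_def using T by auto
    show "0\<^sub>v m \<in> I" unfolding I_def using T by (auto simp: mat_vec_zero intro!: image_eqI[of _ _ "0\<^sub>v n"])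
    show "u + w \<in> I" if uw: "u \<in> I" "w \<in> I" for u w
    proof -
      obtain u' w' where "u' \<in> carrier_vec n" "w' \<in> carrier_vec n" "u = T *\<^sub>v u'" "w = T *\<^sub>v w'"
        using uw I_def by auto
      thus ?thesis unfolding I_def using T by (auto simp: mult_add_distrib_mat_vec[symmetric] intro!: image_eqI[of _ _ "u' + w'"])
    qed
    show "t \<cdot>\<^sub>v u \<in> I" if uI: "u \<in> I" for t u
    proof -
      obtain u' where "u' \<in> carrier_vec n" "u = T *\<^sub>v u'" using uI I_def by auto
      thus ?thesis unfolding I_def using T by (auto simp: mult_mat_vec[symmetric] intro!: image_eqI[of _ _ "t \<cdot>\<^sub>v u'"])
    qed
    show "\<sigma> e *\<^sub>v u \<in> I" if uI: "u \<in> I" for e u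
    proof -
      obtain u' where u': "u' \<in> carrier_vec n" "u = T *\<^sub>v u'" using uI I_def by auto
      have "\<sigma> e *\<^sub>v u = T *\<^sub>v (\<rho> e *\<^sub>v u')"
        using u'(2) int[of e] assoc_mult_mat_vec[OF sp(1)[of e] T u'(1)] assoc_mult_mat_vec[OF T rp(1)[of e] u'(1)] by simp
      thus ?thesis unfolding I_def using mult_mat_vec_carrier[OF rp(1) u'(1)] by auto
    qed
  qed
  moreover have "I \<noteq> {0\<^sub>v m}"
  proof
    assume I: "I = {0\<^sub>v m}"
    have "T = 0\<^sub>m m n"
    proof (rule mat_eq_vecI[OF T])
      fix u :: "'k vec" assume u: "u \<in> carrier_vec n"
      hence "T *\<^sub>v u \<in> I" unfolding I_def by auto
      thus "T *\<^sub>v u = 0\<^sub>m m n *\<^sub>v u" using I u by (auto simp: zero_mat_vec)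
    qed simp
    thus False using nz by simp
  qed
  ultimately have Ifull: "I = carrier_vec m" by simp
  have "n \<le> m" by (rule inj_dim[OF T inj])
  moreover have "m \<le> n"
  proof (rule surj_dim[OF T])
    fix u :: "'k vec" assume "u \<in> carrier_vec m"
    hence "u \<in> I" using Ifull by simp
    thus "\<exists>v\<in>carrier_vec n. T *\<^sub>v v = u" unfolding I_def by auto
  qed
  ultimately have mn: "m = n" by simp
  have Tn: "T \<in> carrier_mat n n" using T mn by simp
  have "invertible_mat T"
  proof (rule inj_invertible[OF Tn])
    fix v :: "'k vec" assume "v \<in> carrier_vec n" "T *\<^sub>v v = 0\<^sub>v n"
    thus "v = 0\<^sub>v n" using inj mn by simp
  qed
  with mn show ?thesis by simp
qed

end

context tga begin

definition inv_sub :: "'e set \<Rightarrow> bool" where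
  "inv_sub M \<longleftrightarrow> V.subspace M \<and> (\<forall>e m. m \<in> M \<longrightarrow> e * m \<in> M)"

lemma exists_minimal:
  assumes C: "inv_sub C" "C \<noteq> {0}"
  shows "\<exists>M. inv_sub M \<and> M \<subseteq> C \<and> M \<noteq> {0} \<and> (\<forall>M'. inv_sub M' \<and> M' \<subseteq> M \<longrightarrow> M' = {0} \<or> M' = M)"
proof -
  let ?P = "\<lambda>M. inv_sub M \<and> M \<subseteq> C \<and> M \<noteq> {0}"
  have "?P C" using C by simp
  then obtain M where M: "?P M" and Mle: "\<forall>M'. ?P M' \<longrightarrow> V.dim M \<le> V.dim M'"
    using ex_has_least_nat[of ?P C V.dim] by blast
  have "M' = {0} \<or> M' = M" if M': "inv_sub M'" "M' \<subseteq> M" for M'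
  proof (cases "M' = {0}")
    case False
    hence "?P M'" using M M' by auto
    hence "V.dim M \<le> V.dim M'" using Mle by simp
    hence "M' = M" using FD.subspace_dim_equal[of M' M] M' M unfolding inv_sub_def by simp
    thus ?thesis by simp
  qed simp
  thus ?thesis using M by blast
qed

lemma minimal_module_rep:
  assumes Mi: "inv_sub M" and M0: "M \<noteq> {0}"
    and Mmin: "\<And>M'. inv_sub M' \<Longrightarrow> M' \<subseteq> M \<Longrightarrow> M' = {0} \<or> M' = M"
  shows "\<exists>n \<sigma>. is_simple_rep s n \<sigma> \<and> (\<forall>a. \<sigma> a = 0\<^sub>m n n \<longrightarrow> (\<forall>m\<in>M. a * m = 0))"
proof -
  have Ms: "V.subspace M" and Minv: "\<And>e m. m \<in> M \<Longrightarrow> e * m \<in> M" using Mi unfolding inv_sub_def by auto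
  obtain B where B: "B \<subseteq> M" "V.independent B" "M \<subseteq> V.span B" "card B = V.dim M"
    by (rule V.basis_exists)
  have Bf: "finite B" using FD.finiteI_independent[OF B(2)] .
  have spB: "V.span B = M" using B(1,3) V.span_minimal[OF B(1) Ms] by auto
  obtain vs where vs: "distinct vs" "set vs = B" using finite_distinct_list[OF Bf] by blast
  define n where "n = length vs"
  have vsM: "vs ! k \<in> M" if "k < n" for k using that vs B(1) n_def nth_mem by blast
  have vsB: "vs ! k \<in> B" if "k < n" for k using that vs n_def nth_mem by blast
  have vsS: "vs ! k \<in> V.span B" if "k < n" for k using vsB[OF that] V.span_base by blast
  define lc where "lc x = (\<Sum>k<n. s (x $ k) (vs ! k))" for x :: "'k vec"
  define crd where "crd v = vec n (\<lambda>k. V.representation B v (vs ! k))" for v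
  have crdc: "crd v \<in> carrier_vec n" for v unfolding crd_def by simp
  have lcM: "lc x \<in> M" for x unfolding lc_def
    by (rule V.subspace_sum[OF Ms]) (use vsM V.subspace_scale[OF Ms] in auto)
  have F1: "lc (crd v) = v" if v: "v \<in> M" for v
  proof -
    have "lc (crd v) = (\<Sum>k<n. s (V.representation B v (vs ! k)) (vs ! k))"
      unfolding lc_def crd_def by (intro sum.cong) auto
    also have "\<dots> = (\<Sum>b\<in>B. s (V.representation B v b) b)"
      using sum.reindex_bij_betw[OF bij_betw_nth[OF vs(1) refl vs(2)[symmetric]], of "\<lambda>b. s (V.representation B v b) b"]
      n_def by simp
    also have "\<dots> = v" using V.sum_representation_eq[OF B(2) _ Bf subset_refl] v spB by simp
    finally show ?thesis .
  qed
  have F2: "crd (lc x) = x" if x: "x \<in> carrier_vec n" for x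
  proof (rule eq_vecI)
    show "dim_vec (crd (lc x)) = dim_vec x" using x unfolding crd_def by simp
    fix k assume "k < dim_vec x"
    hence k: "k < n" using x by simp
    have "crd (lc x) $ k = V.representation B (\<Sum>j<n. s (x $ j) (vs ! j)) (vs ! k)"
      unfolding crd_def lc_def using k by simp
    also have "\<dots> = (\<Sum>j<n. x $ j * V.representation B (vs ! j) (vs ! k))"
      using V.representation_sum[OF B(2), of "{..<n}" "\<lambda>j. s (x $ j) (vs ! j)"]
        V.representation_scale[OF B(2)] vsS V.span_scale by simp
    also have "\<dots> = (\<Sum>j<n. if j = k then x $ j else 0)"
    proof (rule sum.cong)
      fix j assume "j \<in> {..<n}"
      hence j: "j < n" by simp
      have "vs ! j = vs ! k \<longleftrightarrow> j = k" using vs(1) j k n_def nth_eq_iff_index_eq by blast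
      thus "x $ j * V.representation B (vs ! j) (vs ! k) = (if j = k then x $ j else 0)"
        using V.representation_basis[OF B(2) vsB[OF j]] by auto
    qed simp
    also have "\<dots> = x $ k" using k by simp
    finally show "crd (lc x) $ k = x $ k" .
  qed
  have lc_inj: "x = y" if "x \<in> carrier_vec n" "y \<in> carrier_vec n" "lc x = lc y" for x y
    using F2 that by metis
  have lc_add: "lc (x + y) = lc x + lc y" if "x \<in> carrier_vec n" "y \<in> carrier_vec n" for x y
    unfolding lc_def using that by (simp add: sum.distrib[symmetric] V.scale_left_distrib)
  have lc_sc: "lc (c \<cdot>\<^sub>v x) = s c (lc x)" if "x \<in> carrier_vec n" for c x
    unfolding lc_def using that by (simp add: V.scale_sum_right V.scale_scale)
  have lc0: "lc (0\<^sub>v n) = 0" unfolding lc_def by simp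
  define \<sigma> where "\<sigma> e = mat n n (\<lambda>(p,q). crd (e * vs ! q) $ p)" for e
  have \<sigma>c: "\<sigma> e \<in> carrier_mat n n" for e unfolding \<sigma>_def by simp
  have F5: "e * lc x = lc (\<sigma> e *\<^sub>v x)" if x: "x \<in> carrier_vec n" for e x
  proof -
    have "e * lc x = (\<Sum>q<n. s (x $ q) (e * vs ! q))" unfolding lc_def by (simp add: sum_distrib_left smr)
    also have "\<dots> = (\<Sum>q<n. s (x $ q) (\<Sum>p<n. s (\<sigma> e $$ (p,q)) (vs ! p)))"
    proof (rule sum.cong)
      fix q assume "q \<in> {..<n}"
      hence q: "q < n" by simp
      have "e * vs ! q = lc (crd (e * vs ! q))" using F1 Minv vsM[OF q] by simp
      also have "\<dots> = (\<Sum>p<n. s (\<sigma> e $$ (p,q)) (vs ! p))" unfolding lc_def \<sigma>_def using q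
        by (intro sum.cong) (auto simp: crd_def)
      finally show "s (x $ q) (e * vs ! q) = s (x $ q) (\<Sum>p<n. s (\<sigma> e $$ (p,q)) (vs ! p))" by simp
    qed simp
    also have "\<dots> = (\<Sum>q<n. \<Sum>p<n. s (\<sigma> e $$ (p,q) * x $ q) (vs ! p))"
      by (simp add: V.scale_sum_right V.scale_scale mult.commute)
    also have "\<dots> = (\<Sum>p<n. \<Sum>q<n. s (\<sigma> e $$ (p,q) * x $ q) (vs ! p))" by (rule sum.swap)
    also have "\<dots> = (\<Sum>p<n. s (\<Sum>q<n. \<sigma> e $$ (p,q) * x $ q) (vs ! p))" by (simp add: V.scale_sum_left)
    also have "\<dots> = lc (\<sigma> e *\<^sub>v x)" unfolding lc_def
    proof (rule sum.cong)
      fix p assume "p \<in> {..<n}"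
      hence p: "p < n" by simp
      have "(\<sigma> e *\<^sub>v x) $ p = (\<Sum>q\<in>{0..<n}. \<sigma> e $$ (p,q) * x $ q)"
        using p x \<sigma>c[of e] by (simp add: scalar_prod_def)
      thus "s (\<Sum>q<n. \<sigma> e $$ (p,q) * x $ q) (vs ! p) = s ((\<sigma> e *\<^sub>v x) $ p) (vs ! p)"
        by (simp add: atLeast0LessThan)
    qed simp
    finally show ?thesis .
  qed
  have mvc: "\<sigma> e *\<^sub>v x \<in> carrier_vec n" if "x \<in> carrier_vec n" for e x
    using mult_mat_vec_carrier[OF \<sigma>c that] .
  have rep: "is_rep s n \<sigma>"
    unfolding is_rep_def
  proof (intro conjI allI)
    show "\<sigma> e \<in> carrier_mat n n" for e by (rule \<sigma>c)
    show "\<sigma> (x + y) = \<sigma> x + \<sigma> y" for x y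
    proof (rule mat_eq_vecI[OF \<sigma>c])
      show "\<sigma> x + \<sigma> y \<in> carrier_mat n n" using \<sigma>c by simp
      fix v :: "'k vec" assume v: "v \<in> carrier_vec n"
      have "lc (\<sigma> (x + y) *\<^sub>v v) = (x + y) * lc v" using F5[OF v] by simp
      also have "\<dots> = x * lc v + y * lc v" by (rule distrib_right)
      also have "\<dots> = lc (\<sigma> x *\<^sub>v v) + lc (\<sigma> y *\<^sub>v v)" using F5[OF v] by simp
      also have "\<dots> = lc ((\<sigma> x + \<sigma> y) *\<^sub>v v)"
        using lc_add[OF mvc[OF v] mvc[OF v]] add_mult_distrib_mat_vec[OF \<sigma>c \<sigma>c v] by simp
      finally have eq: "lc (\<sigma> (x + y) *\<^sub>v v) = lc ((\<sigma> x + \<sigma> y) *\<^sub>v v)" .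
      have cc: "(\<sigma> x + \<sigma> y) *\<^sub>v v \<in> carrier_vec n" using \<sigma>c v by (meson add_carrier_mat mult_mat_vec_carrier)
      show "\<sigma> (x + y) *\<^sub>v v = (\<sigma> x + \<sigma> y) *\<^sub>v v"
        by (rule lc_inj[OF mvc[OF v] cc eq])
    qed
    show "\<sigma> (s c x) = c \<cdot>\<^sub>m \<sigma> x" for c x
    proof (rule mat_eq_vecI[OF \<sigma>c])
      show "c \<cdot>\<^sub>m \<sigma> x \<in> carrier_mat n n" using \<sigma>c by simp
      fix v :: "'k vec" assume v: "v \<in> carrier_vec n"
      have "lc (\<sigma> (s c x) *\<^sub>v v) = s c x * lc v" using F5[OF v] by simp
      also have "\<dots> = s c (x * lc v)" by (rule sml)
      also have "\<dots> = s c (lc (\<sigma> x *\<^sub>v v))" using F5[OF v] by simp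
      also have "\<dots> = lc ((c \<cdot>\<^sub>m \<sigma> x) *\<^sub>v v)"
        using lc_sc[OF mvc[OF v]] smult_mat_vec[OF \<sigma>c v] by simp
      finally have eq: "lc (\<sigma> (s c x) *\<^sub>v v) = lc ((c \<cdot>\<^sub>m \<sigma> x) *\<^sub>v v)" .
      have cc: "(c \<cdot>\<^sub>m \<sigma> x) *\<^sub>v v \<in> carrier_vec n" using \<sigma>c v by (meson smult_carrier_mat mult_mat_vec_carrier)
      show "\<sigma> (s c x) *\<^sub>v v = (c \<cdot>\<^sub>m \<sigma> x) *\<^sub>v v"
        by (rule lc_inj[OF mvc[OF v] cc eq])
    qed
    show "\<sigma> (x * y) = \<sigma> x * \<sigma> y" for x y
    proof (rule mat_eq_vecI[OF \<sigma>c])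
      show "\<sigma> x * \<sigma> y \<in> carrier_mat n n" using \<sigma>c by (meson mult_carrier_mat)
      fix v :: "'k vec" assume v: "v \<in> carrier_vec n"
      have "lc (\<sigma> (x * y) *\<^sub>v v) = (x * y) * lc v" using F5[OF v] by simp
      also have "\<dots> = x * (y * lc v)" by (rule mult.assoc)
      also have "\<dots> = x * lc (\<sigma> y *\<^sub>v v)" using F5[OF v] by simp
      also have "\<dots> = lc (\<sigma> x *\<^sub>v (\<sigma> y *\<^sub>v v))" using F5[OF mvc[OF v]] by simp
      also have "\<dots> = lc ((\<sigma> x * \<sigma> y) *\<^sub>v v)" using assoc_mult_mat_vec[OF \<sigma>c \<sigma>c v] by simp
      finally have eq: "lc (\<sigma> (x * y) *\<^sub>v v) = lc ((\<sigma> x * \<sigma> y) *\<^sub>v v)" .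
      have cc: "(\<sigma> x * \<sigma> y) *\<^sub>v v \<in> carrier_vec n" using \<sigma>c v by (meson mult_carrier_mat mult_mat_vec_carrier)
      show "\<sigma> (x * y) *\<^sub>v v = (\<sigma> x * \<sigma> y) *\<^sub>v v"
        by (rule lc_inj[OF mvc[OF v] cc eq])
    qed
    show "\<sigma> 1 = 1\<^sub>m n"
    proof (rule mat_eq_vecI[OF \<sigma>c])
      show "1\<^sub>m n \<in> carrier_mat n n" by simp
      fix v :: "'k vec" assume v: "v \<in> carrier_vec n"
      have "lc (\<sigma> 1 *\<^sub>v v) = lc v" using F5[OF v, of 1] by simp
      thus "\<sigma> 1 *\<^sub>v v = 1\<^sub>m n *\<^sub>v v" using lc_inj[OF mvc[OF v] v] v by simp
    qed
  qed
  have npos: "n > 0"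
  proof (rule ccontr)
    assume "\<not> n > 0"
    hence "B = {}" using vs n_def by simp
    hence "M \<subseteq> {0}" using B(3) by simp
    thus False using M0 V.subspace_0[OF Ms] by auto
  qed
  have simple: "is_simple_rep s n \<sigma>"
    unfolding is_simple_rep_def
  proof (intro conjI rep npos allI impI)
    fix W assume W: "W \<subseteq> carrier_vec n"
      and cl: "0\<^sub>v n \<in> W \<and> (\<forall>v\<in>W. \<forall>u\<in>W. v + u \<in> W) \<and> (\<forall>c. \<forall>v\<in>W. c \<cdot>\<^sub>v v \<in> W) \<and> (\<forall>e. \<forall>v\<in>W. \<sigma> e *\<^sub>v v \<in> W)"
    define M' where "M' = lc ` W"
    have "inv_sub M'"
      unfolding inv_sub_def V.subspace_def
    proof (intro conjI allI ballI impI)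
      show "0 \<in> M'" unfolding M'_def using cl lc0 by force
      fix x y assume "x \<in> M'" "y \<in> M'"
      then obtain x' y' where xy: "x' \<in> W" "y' \<in> W" "x = lc x'" "y = lc y'" unfolding M'_def by auto
      have "x' \<in> carrier_vec n" "y' \<in> carrier_vec n" using xy W by auto
      hence "x + y = lc (x' + y')" using xy lc_add[of x' y'] by simp
      moreover have "x' + y' \<in> W" using cl xy by simp
      ultimately show "x + y \<in> M'" unfolding M'_def by blast
    next
      fix c x assume "x \<in> M'"
      then obtain x' where xy: "x' \<in> W" "x = lc x'" unfolding M'_def by auto
      have "x' \<in> carrier_vec n" using xy W by auto
      hence "s c x = lc (c \<cdot>\<^sub>v x')" using xy lc_sc[of x' c] by simp
      moreover have "c \<cdot>\<^sub>v x' \<in> W" using cl xy by simp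
      ultimately show "s c x \<in> M'" unfolding M'_def by blast
    next
      fix e m assume "m \<in> M'"
      then obtain x' where xy: "x' \<in> W" "m = lc x'" unfolding M'_def by auto
      have "x' \<in> carrier_vec n" using xy W by auto
      hence "e * m = lc (\<sigma> e *\<^sub>v x')" using xy F5[of x' e] by simp
      moreover have "\<sigma> e *\<^sub>v x' \<in> W" using cl xy by simp
      ultimately show "e * m \<in> M'" unfolding M'_def by blast
    qed
    moreover have "M' \<subseteq> M" unfolding M'_def using lcM by auto
    ultimately have "M' = {0} \<or> M' = M" using Mmin by simp
    thus "W = {0\<^sub>v n} \<or> W = carrier_vec n"
    proof
      assume M'0: "M' = {0}"
      have "x = 0\<^sub>v n" if "x \<in> W" for x
      proof -
        have "lc x = lc (0\<^sub>v n)" using M'0 that lc0 unfolding M'_def by auto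
        thus ?thesis using lc_inj W that by auto
      qed
      thus ?thesis using cl by auto
    next
      assume M'M: "M' = M"
      have "y \<in> W" if y: "y \<in> carrier_vec n" for y
      proof -
        have "lc y \<in> M'" using M'M lcM by simp
        then obtain x where "x \<in> W" "lc x = lc y" unfolding M'_def by auto
        thus ?thesis using lc_inj W y by auto
      qed
      thus ?thesis using W by auto
    qed
  qed
  have ann: "\<forall>m\<in>M. a * m = 0" if a: "\<sigma> a = 0\<^sub>m n n" for a
  proof
    fix m assume m: "m \<in> M"
    have "a * m = a * lc (crd m)" using F1[OF m] by simp
    also have "\<dots> = lc (\<sigma> a *\<^sub>v crd m)" using F5[OF crdc] by simp
    also have "\<dots> = 0" using a crdc lc0 by (simp add: zero_mat_vec)
    finally show "a * m = 0" .
  qed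
  show ?thesis using simple ann by blast
qed

end


locale tga_reps = tga \<Gamma> s Eg b
  for \<Gamma> :: "('g, 'h) monoid_scheme"
    and s :: "'k::field_char_0 \<Rightarrow> 'e::ring_1 \<Rightarrow> 'e"
    and Eg :: "'g \<Rightarrow> 'e set"
    and b :: "'g \<Rightarrow> 'e" +
  fixes r' :: nat and d :: "nat \<Rightarrow> nat" and \<rho> :: "nat \<Rightarrow> 'e \<Rightarrow> 'k mat"
  assumes cl: "alg_closed_field TYPE('k)"
    and simple: "\<forall>i\<in>{1..r'}. is_simple_rep s (d i) (\<rho> i)"
    and distinct: "\<forall>i\<in>{1..r'}. \<forall>j\<in>{1..r'}. rep_iso (d i) (\<rho> i) (d j) (\<rho> j) \<longrightarrow> i = j"
    and complete: "\<forall>n \<sigma>. is_simple_rep s n \<sigma> \<longrightarrow> (\<exists>i\<in>{1..r'}. rep_iso n \<sigma> (d i) (\<rho> i))"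
begin

interpretation Gr: group \<Gamma> by (rule grp)
interpretation VP: vector_space_pair s s by unfold_locales

definition Iset where "Iset = {a. \<forall>j\<in>{1..r'}. \<rho> j a = 0\<^sub>m (d j) (d j)}"

lemma rho_rep: "j \<in> {1..r'} \<Longrightarrow> is_rep s (d j) (\<rho> j)"
  using simple simple_rep by blast

lemma Iset_left: assumes a: "a \<in> Iset" shows "e * a \<in> Iset"
  unfolding Iset_def
proof (intro CollectI ballI)
  fix j assume j: "j \<in> {1..r'}"
  have "\<rho> j (e * a) = \<rho> j e * \<rho> j a" using rep_props(4)[OF rho_rep[OF j]] by simp
  also have "\<dots> = 0\<^sub>m (d j) (d j)" using a j right_mult_zero_mat[OF rep_props(1)[OF rho_rep[OF j]]] unfolding Iset_def by simp
  finally show "\<rho> j (e * a) = 0\<^sub>m (d j) (d j)" .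
qed

lemma Iset_right: assumes a: "a \<in> Iset" shows "a * e \<in> Iset"
  unfolding Iset_def
proof (intro CollectI ballI)
  fix j assume j: "j \<in> {1..r'}"
  have "\<rho> j (a * e) = \<rho> j a * \<rho> j e" using rep_props(4)[OF rho_rep[OF j]] by simp
  also have "\<dots> = 0\<^sub>m (d j) (d j)" using a j left_mult_zero_mat[OF rep_props(1)[OF rho_rep[OF j]]] unfolding Iset_def by simp
  finally show "\<rho> j (a * e) = 0\<^sub>m (d j) (d j)" .
qed

lemma ann_minimal:
  assumes Mi: "inv_sub M" and M0: "M \<noteq> {0}"
    and Mmin: "\<And>M'. inv_sub M' \<Longrightarrow> M' \<subseteq> M \<Longrightarrow> M' = {0} \<or> M' = M"
    and a: "a \<in> Iset" and m: "m \<in> M"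
  shows "a * m = 0"
proof -
  obtain n \<sigma> where s1: "is_simple_rep s n \<sigma>" and ann: "\<forall>a. \<sigma> a = 0\<^sub>m n n \<longrightarrow> (\<forall>m\<in>M. a * m = 0)"
    using minimal_module_rep[OF Mi M0 Mmin] by blast
  obtain j where j: "j \<in> {1..r'}" and iso: "rep_iso n \<sigma> (d j) (\<rho> j)" using complete s1 by blast
  obtain P where P: "P \<in> carrier_mat n n" "invertible_mat P" "\<And>e. P * \<sigma> e = \<rho> j e * P" and nd: "n = d j"
    using iso unfolding rep_iso_def by blast
  note Pi = mat_inv_props[OF P(1,2)]
  have sc: "\<sigma> e \<in> carrier_mat n n" for e using rep_props(1)[OF simple_rep(1)[OF s1]] .
  have "P * \<sigma> a = 0\<^sub>m n n" using P(3)[of a] a j P(1) nd unfolding Iset_def by simp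
  hence "\<sigma> a = 0\<^sub>m n n"
  proof -
    assume PZ: "P * \<sigma> a = 0\<^sub>m n n"
    have "\<sigma> a = (mat_inv P * P) * \<sigma> a" using Pi left_mult_one_mat[OF sc[of a]] by simp
    also have "\<dots> = mat_inv P * (P * \<sigma> a)" using Pi P(1) sc by (meson assoc_mult_mat)
    also have "\<dots> = 0\<^sub>m n n" using PZ Pi right_mult_zero_mat[of "mat_inv P" n n n] by simp
    finally show ?thesis .
  qed
  thus ?thesis using ann m by blast
qed

lemma lin_iff: "Vector_Spaces.linear s s f \<longleftrightarrow> (\<forall>x y. f (x + y) = f x + f y) \<and> (\<forall>c x. f (s c x) = s c (f x))"
  using Vector_Spaces.linear_iff[of s s f] V.vector_space_axioms by simp

lemma injectivity: assumes a: "a \<in> Iset" shows "a = 0"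
proof -
  define A where "A = {v. \<forall>a\<in>Iset. a * v = 0}"
  have Ai: "inv_sub A" unfolding inv_sub_def V.subspace_def A_def
    by (auto simp: smr distrib_left mult.assoc[symmetric] Iset_right)
  have As: "V.subspace A" using Ai inv_sub_def by simp
  obtain BA where BA: "BA \<subseteq> A" "V.independent BA" "A \<subseteq> V.span BA" by (rule V.basis_exists)
  define p where "p = VP.construct BA (\<lambda>v. v)"
  have pl: "Vector_Spaces.linear s s p" unfolding p_def by (rule VP.linear_construct[OF BA(2)])
  hence padd: "p (x + y) = p x + p y" and psc: "p (s c x) = s c (p x)" for x y c using lin_iff by auto
  have idl: "Vector_Spaces.linear s s (\<lambda>v. v)" using lin_iff by simp
  have pA: "p v = v" if v: "v \<in> A" for v
    using VP.linear_eq_on[OF pl idl, of v BA] BA v VP.construct_basis[OF BA(2)] unfolding p_def by blast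
  have pinA: "p v \<in> A" for v
  proof -
    let ?EB = "V.extend_basis BA"
    have "v \<in> V.span ?EB" using V.span_extend_basis[OF BA(2)] by simp
    thus ?thesis
    proof (rule V.span_induct)
      show "V.subspace {v. p v \<in> A}" unfolding V.subspace_def
        using As padd psc V.subspace_add V.subspace_scale V.subspace_0 psc[of 0 0] by auto
      fix x assume x: "x \<in> ?EB"
      show "p x \<in> A"
      proof (cases "x \<in> BA")
        case True thus ?thesis using pA BA(1) by auto
      next
        case False
        hence "x \<in> V.span (?EB - BA)" using x V.span_base by blast
        hence "p x = 0" unfolding p_def by (rule VP.construct_outside[OF BA(2)])
        thus ?thesis using V.subspace_0[OF As] by simp
      qed
    qed
  qed
  define P where "P v = (\<Sum>x\<in>G. b x * p (ring_inv (b x) * v))" for v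
  have Padd: "P (u + v) = P u + P v" for u v unfolding P_def by (simp add: distrib_left padd sum.distrib)
  have Psc: "P (s c u) = s c (P u)" for c u unfolding P_def by (simp add: smr psc V.scale_sum_right)
  have P0: "P 0 = 0" using Psc[of 0 0] by simp
  have Pinv: "P (e * v) = e * P v" for e v
  proof (rule span_all[where P="\<lambda>e. \<forall>v. P (e * v) = e * P v", rule_format])
    show "V.subspace {e. \<forall>v. P (e * v) = e * P v}" unfolding V.subspace_def
      by (auto simp: P0 distrib_right Padd sml Psc)
    fix y assume y: "y \<in> G"
    fix v
    have "b y * P v = (\<Sum>x\<in>G. b y * b x * p (ring_inv (b x) * v))"
      unfolding P_def by (simp add: sum_distrib_left mult.assoc)
    also have "\<dots> = (\<Sum>x\<in>G. (b y * b x) * p (ring_inv (b y * b x) * (b y * v)))"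
    proof (rule sum.cong)
      fix x assume x: "x \<in> G"
      have "ring_inv (b y * b x) * b y = ring_inv (b x)"
        using ring_inv_mult[OF hu_b[OF y] hu_b[OF x]] hu_inv(2)[OF hu_b[OF y]] by (simp add: mult.assoc)
      thus "b y * b x * p (ring_inv (b x) * v) = (b y * b x) * p (ring_inv (b y * b x) * (b y * v))"
        by (simp add: mult.assoc[symmetric])
    qed simp
    also have "\<dots> = (\<Sum>x\<in>G. b x * p (ring_inv (b x) * (b y * v)))"
    proof (rule RI[OF _ y, where F="\<lambda>u u'. u * p (u' * (b y * v))"])
      fix c :: 'k and u u' assume c: "c \<noteq> 0"
      show "s c u * p (s (inverse c) u' * (b y * v)) = u * p (u' * (b y * v))"
        using c by (simp add: sml smr psc V.scale_scale)
    qed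
    finally show "P (b y * v) = b y * P v" unfolding P_def by simp
  qed
  have PinA: "P v \<in> A" for v unfolding P_def
    using Ai pinA unfolding inv_sub_def by (auto intro!: V.subspace_sum)
  define N where "N = (of_nat (card G) :: 'k)"
  have N0: "N \<noteq> 0" unfolding N_def using fin one_G by (auto simp: card_gt_0_iff)
  have PA: "P v = s N v" if v: "v \<in> A" for v
  proof -
    have "P v = (\<Sum>x\<in>G. v)"
    proof (unfold P_def, rule sum.cong)
      fix x assume x: "x \<in> G"
      have "ring_inv (b x) * v \<in> A" using v Ai unfolding inv_sub_def by auto
      thus "b x * p (ring_inv (b x) * v) = v"
        using pA hu_inv(1)[OF hu_b[OF x]] by (simp add: mult.assoc[symmetric])
    qed simp
    also have "\<dots> = (\<Sum>x\<in>G. s 1 v)" by simp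
    also have "\<dots> = s N v" unfolding N_def by (simp only: V.scale_sum_left[symmetric]) simp
    finally show ?thesis .
  qed
  define C where "C = {v. P v = 0}"
  have Ci: "inv_sub C" unfolding inv_sub_def V.subspace_def C_def
    by (auto simp: P0 Padd Psc Pinv)
  show ?thesis
  proof (cases "C = {0}")
    case True
    have "v \<in> A" for v
    proof -
      define w where "w = v - s (1 / N) (P v)"
      have h: "P v = P w + s (1 / N) (P (P v))"
        unfolding w_def using Padd[of "v - s (1 / N) (P v)" "s (1 / N) (P v)"] Psc by simp
      have "P w = P v - s (1 / N) (P (P v))" using h by (simp add: eq_diff_eq)
      also have "\<dots> = 0" using PA[OF PinA[of v]] N0 by (simp add: V.scale_scale)
      finally have "w = 0" using True C_def by auto
      hence "v = s (1 / N) (P v)" unfolding w_def by simp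
      thus ?thesis using PinA V.subspace_scale[OF As] by metis
    qed
    hence "a * 1 = 0" using a A_def by blast
    thus ?thesis by simp
  next
    case False
    obtain M where M: "inv_sub M" "M \<subseteq> C" "M \<noteq> {0}"
      and Mmin: "\<forall>M'. inv_sub M' \<and> M' \<subseteq> M \<longrightarrow> M' = {0} \<or> M' = M"
      using exists_minimal[OF Ci False] by blast
    have "m = 0" if m: "m \<in> M" for m
    proof -
      have "m \<in> A" unfolding A_def using ann_minimal[OF M(1) M(3) _ _ m] Mmin by blast
      hence "P m = s N m" by (rule PA)
      moreover have "P m = 0" using M(2) m C_def by auto
      ultimately show ?thesis using N0 by simp
    qed
    hence "M \<subseteq> {0}" by auto
    thus ?thesis using M(3) M(1) V.subspace_0 unfolding inv_sub_def by auto
  qed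
qed

end


context tga begin

lemma avg_trace:
  assumes r: "is_rep s n \<rho>" and Z: "Z \<in> carrier_mat n n"
  shows "(\<Sum>x\<in>G. mat_trace (\<rho> (b x) * Z * \<rho> (ring_inv (b x)))) = of_nat (card G) * mat_trace Z"
proof -
  note rp = rep_props[OF r]
  have "mat_trace (\<rho> (b x) * Z * \<rho> (ring_inv (b x))) = mat_trace Z" if x: "x \<in> G" for x
  proof -
    have c: "Z * \<rho> (ring_inv (b x)) \<in> carrier_mat n n" using Z rp(1) by (meson mult_carrier_mat)
    have "\<rho> (b x) * Z * \<rho> (ring_inv (b x)) = \<rho> (b x) * (Z * \<rho> (ring_inv (b x)))"
      by (rule assoc_mult_mat[OF rp(1) Z rp(1)])
    hence "mat_trace (\<rho> (b x) * Z * \<rho> (ring_inv (b x))) = mat_trace ((Z * \<rho> (ring_inv (b x))) * \<rho> (b x))"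
      using trace_comm[OF rp(1) c] by simp
    also have "(Z * \<rho> (ring_inv (b x))) * \<rho> (b x) = Z * (\<rho> (ring_inv (b x)) * \<rho> (b x))"
      by (rule assoc_mult_mat[OF Z rp(1) rp(1)])
    also have "\<rho> (ring_inv (b x)) * \<rho> (b x) = 1\<^sub>m n"
      using hu_inv(2)[OF hu_b[OF x]] rp(4)[symmetric] rp(5) by metis
    finally show ?thesis using Z by simp
  qed
  thus ?thesis by simp
qed

lemma msum_zero: "msum n m (\<lambda>x. f x) S = 0\<^sub>m n m" if "\<And>x. x \<in> S \<Longrightarrow> f x = 0\<^sub>m n m"
  using that by (intro eq_matI) auto

end

context tga_reps begin

interpretation Gr: group \<Gamma> by (rule grp)

definition NN where "NN = (of_nat (card G) :: 'k)"

lemma NN0: "NN \<noteq> 0" unfolding NN_def using fin one_G by (auto simp: card_gt_0_iff)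

lemma orth:
  assumes i: "i \<in> {1..r'}" and j: "j \<in> {1..r'}" and X: "X \<in> carrier_mat (d j) (d i)"
  shows "msum (d j) (d i) (\<lambda>x. \<rho> j (b x) * X * \<rho> i (ring_inv (b x))) G =
     (if i = j then (NN / of_nat (d i) * mat_trace X) \<cdot>\<^sub>m 1\<^sub>m (d i) else 0\<^sub>m (d j) (d i))"
proof -
  define T where "T = msum (d j) (d i) (\<lambda>x. \<rho> j (b x) * X * \<rho> i (ring_inv (b x))) G"
  have Tc: "T \<in> carrier_mat (d j) (d i)" unfolding T_def by simp
  have int: "\<rho> j e * T = T * \<rho> i e" for e unfolding T_def by (rule IT[OF rho_rep[OF j] rho_rep[OF i] X])
  show ?thesis
  proof (cases "i = j")
    case False
    have "T = 0\<^sub>m (d j) (d i)"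
    proof (rule ccontr)
      assume nz: "T \<noteq> 0\<^sub>m (d j) (d i)"
      have "d j = d i \<and> invertible_mat T"
        by (rule schur_iso[OF _ _ Tc int nz]) (use simple i j in auto)
      hence "rep_iso (d i) (\<rho> i) (d j) (\<rho> j)" unfolding rep_iso_def using Tc int by auto
      thus False using distinct i j False by blast
    qed
    thus ?thesis using False T_def by simp
  next
    case True
    hence X': "X \<in> carrier_mat (d i) (d i)" using X by simp
    have Tc': "T \<in> carrier_mat (d i) (d i)" using Tc True by simp
    have si: "is_simple_rep s (d i) (\<rho> i)" using simple i by blast
    have comm: "T * \<rho> i e = \<rho> i e * T" for e using int[of e] True by simp
    obtain c where c: "T = c \<cdot>\<^sub>m 1\<^sub>m (d i)"
      using schur_scalar[OF cl si Tc' comm] by blast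
    note rpi = rep_props(1)[OF rho_rep[OF i]]
    have "mat_trace T = (\<Sum>x\<in>G. mat_trace (\<rho> i (b x) * X * \<rho> i (ring_inv (b x))))"
      unfolding T_def True
    proof (rule trace_msum)
      fix x show "\<rho> j (b x) * X * \<rho> j (ring_inv (b x)) \<in> carrier_mat (d j) (d j)"
        using rpi X' True by (meson mult_carrier_mat)
    qed
    also have "\<dots> = NN * mat_trace X" unfolding NN_def by (rule avg_trace[OF rho_rep[OF i] X'])
    finally have "mat_trace T = NN * mat_trace X" .
    moreover have "mat_trace T = c * of_nat (d i)" using c trace_smult[OF one_carrier_mat, of c "d i"] trace_one[of "d i", where 'a='k] by simp
    moreover have "d i > 0" using simple i simple_rep(2) by blast
    ultimately have "c = NN / of_nat (d i) * mat_trace X" by (simp add: field_simps)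
    thus ?thesis using c True T_def by simp
  qed
qed


definition z where "z i = (\<Sum>x\<in>G. s (of_nat (d i) / NN * mat_trace (\<rho> i (ring_inv (b x)))) (b x))"

lemma rho_entry_lin:
  assumes j: "j \<in> {1..r'}" and p: "p < d j" and q: "q < d j"
  shows "\<rho> j (u + v) $$ (p,q) = \<rho> j u $$ (p,q) + \<rho> j v $$ (p,q)"
    "\<rho> j (s c u) $$ (p,q) = c * \<rho> j u $$ (p,q)"
  using rep_props(1,2,3)[OF rho_rep[OF j]] p q by (metis carrier_matD(1,2) index_add_mat(1), metis carrier_matD(1,2) index_smult_mat(1))

lemma rho_z_entry:
  assumes i: "i \<in> {1..r'}" and j: "j \<in> {1..r'}" and p: "p < d j" and q: "q < d j"
  shows "\<rho> j (z i) $$ (p,q) = (if i = j \<and> p = q then 1 else 0)"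
proof -
  note rpi = rep_props(1)[OF rho_rep[OF i]] and rpj = rep_props(1)[OF rho_rep[OF j]]
  define K where "K = of_nat (d i) / NN"
  have "\<rho> j (z i) $$ (p,q) = (\<Sum>x\<in>G. \<rho> j (s (K * mat_trace (\<rho> i (ring_inv (b x)))) (b x)) $$ (p,q))"
    unfolding z_def K_def by (rule rep_entry_sum[OF rho_rep[OF j] p q])
  also have "\<dots> = (\<Sum>x\<in>G. K * (\<Sum>t<d i. \<rho> j (b x) $$ (p,q) * \<rho> i (ring_inv (b x)) $$ (t,t)))"
  proof (rule sum.cong)
    fix x assume x: "x \<in> G"
    have "mat_trace (\<rho> i (ring_inv (b x))) = (\<Sum>t<d i. \<rho> i (ring_inv (b x)) $$ (t,t))"
      unfolding mat_trace_def using rpi[of "ring_inv (b x)"] by simp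
    thus "\<rho> j (s (K * mat_trace (\<rho> i (ring_inv (b x)))) (b x)) $$ (p,q) =
        K * (\<Sum>t<d i. \<rho> j (b x) $$ (p,q) * \<rho> i (ring_inv (b x)) $$ (t,t))"
      using rho_entry_lin(2)[OF j p q] by (simp add: sum_distrib_left sum_distrib_right ac_simps)
  qed simp
  also have "\<dots> = K * (\<Sum>t<d i. \<Sum>x\<in>G. \<rho> j (b x) $$ (p,q) * \<rho> i (ring_inv (b x)) $$ (t,t))"
    by (simp add: sum_distrib_left[symmetric] sum.swap[of _ G])
  also have "\<dots> = K * (\<Sum>t<d i. (if i = j then (NN / of_nat (d i) * mat_trace (umat (d j) (d i) q t :: 'k mat)) \<cdot>\<^sub>m 1\<^sub>m (d i) else 0\<^sub>m (d j) (d i)) $$ (p,t))"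
  proof (intro arg_cong[where f="\<lambda>x. K * x"] sum.cong refl)
    fix t assume "t \<in> {..<d i}"
    hence t: "t < d i" by simp
    have "(\<Sum>x\<in>G. \<rho> j (b x) $$ (p,q) * \<rho> i (ring_inv (b x)) $$ (t,t))
        = msum (d j) (d i) (\<lambda>x. \<rho> j (b x) * umat (d j) (d i) q t * \<rho> i (ring_inv (b x))) G $$ (p,t)"
      using p t q by (simp add: umat_prod[OF rpj rpi q t p t])
    also have "\<dots> = (if i = j then (NN / of_nat (d i) * mat_trace (umat (d j) (d i) q t :: 'k mat)) \<cdot>\<^sub>m 1\<^sub>m (d i) else 0\<^sub>m (d j) (d i)) $$ (p,t)"
      using orth[OF i j umat_carrier] by simp
    finally show "(\<Sum>x\<in>G. \<rho> j (b x) $$ (p,q) * \<rho> i (ring_inv (b x)) $$ (t,t)) =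
      (if i = j then (NN / of_nat (d i) * mat_trace (umat (d j) (d i) q t :: 'k mat)) \<cdot>\<^sub>m 1\<^sub>m (d i) else 0\<^sub>m (d j) (d i)) $$ (p,t)" .
  qed
  also have "\<dots> = (if i = j \<and> p = q then 1 else 0)"
  proof (cases "i = j")
    case False thus ?thesis using p by simp
  next
    case True
    have dpos: "d i > 0" using simple i simple_rep(2) by blast
    have "(\<Sum>t<d i. ((NN / of_nat (d i) * mat_trace (umat (d j) (d i) q t :: 'k mat)) \<cdot>\<^sub>m 1\<^sub>m (d i)) $$ (p,t))
        = (\<Sum>t<d i. if t = q then (if p = q then NN / of_nat (d i) else 0) else 0)"
      using True p q by (intro sum.cong) (auto simp: trace_umat)
    also have "\<dots> = (if p = q then NN / of_nat (d i) else 0)" using q True by simp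
    finally show ?thesis using True K_def NN0 dpos by simp
  qed
  finally show ?thesis .
qed

lemma one_sum_z: "1 = (\<Sum>i\<in>{1..r'}. z i)"
proof -
  define u where "u = 1 - (\<Sum>i\<in>{1..r'}. z i)"
  have "u \<in> Iset" unfolding Iset_def
  proof (intro CollectI ballI)
    fix j assume j: "j \<in> {1..r'}"
    note rpj = rep_props[OF rho_rep[OF j]]
    show "\<rho> j u = 0\<^sub>m (d j) (d j)"
    proof (rule eq_matI)
      fix p q assume "p < dim_row (0\<^sub>m (d j) (d j) :: 'k mat)" "q < dim_col (0\<^sub>m (d j) (d j) :: 'k mat)"
      hence p: "p < d j" and q: "q < d j" by auto
      have h: "\<rho> j u $$ (p,q) + \<rho> j (\<Sum>i\<in>{1..r'}. z i) $$ (p,q) = \<rho> j 1 $$ (p,q)"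
        using rho_entry_lin(1)[OF j p q, of u "\<Sum>i\<in>{1..r'}. z i"] unfolding u_def by simp
      have "\<rho> j (\<Sum>i\<in>{1..r'}. z i) $$ (p,q) = (\<Sum>i\<in>{1..r'}. \<rho> j (z i) $$ (p,q))"
        by (rule rep_entry_sum[OF rho_rep[OF j] p q])
      also have "\<dots> = (\<Sum>i\<in>{1..r'}. if i = j then (if p = q then 1 else 0) else 0)"
        by (rule sum.cong) (use rho_z_entry[OF _ j p q] in auto)
      also have "\<dots> = (if p = q then 1 else 0)" using j by simp
      finally have "\<rho> j u $$ (p,q) + (if p = q then 1 else 0) = (if p = q then 1 else 0)"
        using h rpj(5) p q by simp
      thus "\<rho> j u $$ (p,q) = 0\<^sub>m (d j) (d j) $$ (p,q)" using p q by simp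
    qed (use rpj(1) in auto)
  qed
  hence "u = 0" by (rule injectivity)
  thus ?thesis unfolding u_def by simp
qed

lemma tau_formula: "tau e = (\<Sum>i\<in>{1..r'}. of_nat (d i) / NN * mat_trace (\<rho> i e))"
proof -
  have "tau e = tau (e * (\<Sum>i\<in>{1..r'}. z i))" using one_sum_z by simp
  also have "\<dots> = (\<Sum>i\<in>{1..r'}. tau (e * z i))" by (simp add: sum_distrib_left tau_sum)
  also have "\<dots> = (\<Sum>i\<in>{1..r'}. of_nat (d i) / NN * mat_trace (\<rho> i e))"
  proof (rule sum.cong)
    fix i assume i: "i \<in> {1..r'}"
    have "tau (e * z i) = (\<Sum>x\<in>G. of_nat (d i) / NN * mat_trace (\<rho> i (ring_inv (b x))) * tau (e * b x))"
      unfolding z_def by (simp add: sum_distrib_left smr tau_sum tau_scale)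
    also have "\<dots> = of_nat (d i) / NN * (\<Sum>x\<in>G. tau (e * b x) * mat_trace (\<rho> i (ring_inv (b x))))"
      by (simp add: sum_distrib_left ac_simps)
    also have "(\<Sum>x\<in>G. tau (e * b x) * mat_trace (\<rho> i (ring_inv (b x)))) = mat_trace (\<rho> i e)"
    proof -
      have "mat_trace (\<rho> i e) = mat_trace (\<rho> i (\<Sum>x\<in>G. s (tau (e * b x)) (ring_inv (b x))))"
        using D1[of e] by simp
      also have "\<dots> = (\<Sum>x\<in>G. mat_trace (\<rho> i (s (tau (e * b x)) (ring_inv (b x)))))"
        by (rule rep_trace_sum[OF rho_rep[OF i]])
      also have "\<dots> = (\<Sum>x\<in>G. tau (e * b x) * mat_trace (\<rho> i (ring_inv (b x))))"
        using rep_props(1,3)[OF rho_rep[OF i]] trace_smult by (metis (no_types, lifting))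
      finally show ?thesis by simp
    qed
    finally show "tau (e * z i) = of_nat (d i) / NN * mat_trace (\<rho> i e)" .
  qed simp
  finally show ?thesis .
qed

end


context tga_reps begin

interpretation Gr: group \<Gamma> by (rule grp)

lemma main_locale:
  fixes \<iota> :: "'e \<Rightarrow> 'e" and r :: nat and J :: "nat \<Rightarrow> 'k mat" and w w' :: 'g
  assumes auto: "is_alg_auto s \<iota>"
    and rr': "r \<le> r'"
    and stable_iff: "\<forall>i\<in>{1..r'}. i \<le> r \<longleftrightarrow>
                       (\<exists>K \<in> carrier_mat (d i) (d i). invertible_mat K \<and>
                          (\<forall>e. K * \<rho> i e = \<rho> i (\<iota> e) * K))"
    and J: "\<forall>i\<in>{1..r}. J i \<in> carrier_mat (d i) (d i) \<and> invertible_mat (J i) \<and>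
                          (\<forall>e. J i * \<rho> i e = \<rho> i (\<iota> e) * J i)"
    and w: "w \<in> G" and w': "w' \<in> G"
  shows "(\<Sum>i=1..r. mat_trace (\<rho> i (b w) * J i) *
                    mat_trace (mat_inv (J i) * \<rho> i (ring_inv (b w'))))
         = lin_trace s UNIV (\<lambda>e. ring_inv (b w') * inv_into UNIV \<iota> e * b w)"
proof -
  define \<iota>i where "\<iota>i = inv_into UNIV \<iota>"
  have bij: "bij \<iota>" and ilin: "Vector_Spaces.linear s s \<iota>" and imul: "\<And>x y. \<iota> (x * y) = \<iota> x * \<iota> y"
    and i1: "\<iota> 1 = 1" using auto unfolding is_alg_auto_def by auto
  have iadd: "\<iota> (x + y) = \<iota> x + \<iota> y" and isc: "\<iota> (s c x) = s c (\<iota> x)" for x y c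
    using ilin lin_iff by auto
  have ii1: "\<iota> (\<iota>i e) = e" for e unfolding \<iota>i_def using bij by (simp add: bij_is_surj surj_f_inv_f)
  have ii2: "\<iota>i (\<iota> e) = e" for e unfolding \<iota>i_def using bij by (simp add: bij_is_inj inv_into_f_f)
  have iiadd: "\<iota>i (x + y) = \<iota>i x + \<iota>i y" for x y by (metis ii1 ii2 iadd)
  have iisc: "\<iota>i (s c x) = s c (\<iota>i x)" for c x by (metis ii1 ii2 isc)
  have iimul: "\<iota>i (x * y) = \<iota>i x * \<iota>i y" for x y by (metis ii1 ii2 imul)
  have ii1': "\<iota>i 1 = 1" by (metis ii2 i1)
  define \<kappa> where "\<kappa> e = ring_inv (b w') * \<iota>i e * b w" for e
  have kadd: "\<kappa> (u + v) = \<kappa> u + \<kappa> v" for u v unfolding \<kappa>_def by (simp add: iiadd distrib_left distrib_right)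
  have ksc: "\<kappa> (s c u) = s c (\<kappa> u)" for c u unfolding \<kappa>_def by (simp add: iisc sml smr)
  define \<sigma> where "\<sigma> i e = \<rho> i (\<iota>i e)" for i e
  have srep: "is_rep s (d i) (\<sigma> i)" if i: "i \<in> {1..r'}" for i
    using rep_props[OF rho_rep[OF i]] unfolding is_rep_def \<sigma>_def by (simp add: iiadd iisc iimul ii1')
  have ssimple: "is_simple_rep s (d i) (\<sigma> i)" if i: "i \<in> {1..r'}" for i
    unfolding is_simple_rep_def
  proof (intro conjI srep[OF i] allI impI)
    show "d i > 0" using simple i simple_rep(2) by blast
    fix W assume W: "W \<subseteq> carrier_vec (d i)"
      and c: "0\<^sub>v (d i) \<in> W \<and> (\<forall>v\<in>W. \<forall>u\<in>W. v + u \<in> W) \<and> (\<forall>c. \<forall>v\<in>W. c \<cdot>\<^sub>v v \<in> W) \<and> (\<forall>e. \<forall>v\<in>W. \<sigma> i e *\<^sub>v v \<in> W)"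
    have "\<rho> i e *\<^sub>v v \<in> W" if "v \<in> W" for e v
      using c that ii2[of e] unfolding \<sigma>_def by metis
    thus "W = {0\<^sub>v (d i)} \<or> W = carrier_vec (d i)"
      by (intro simple_W[OF _ W]) (use simple i c in auto)
  qed
  define T where "T i = msum (d i) (d i) (\<lambda>x. \<sigma> i (b x) * \<rho> i (b w) * \<rho> i (ring_inv (b x))) G" for i
  define g where "g i = of_nat (d i) / NN * mat_trace (\<rho> i (ring_inv (b w')) * T i)" for i
  have Tc: "T i \<in> carrier_mat (d i) (d i)" for i unfolding T_def by simp
  have Tint: "\<sigma> i e * T i = T i * \<rho> i e" if i: "i \<in> {1..r'}" for i e
    unfolding T_def by (rule IT[OF srep[OF i] rho_rep[OF i] rep_props(1)[OF rho_rep[OF i]]])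
  have RHS: "lin_trace s UNIV (\<lambda>e. ring_inv (b w') * inv_into UNIV \<iota> e * b w) = (\<Sum>i\<in>{1..r'}. g i)"
  proof -
    have "lin_trace s UNIV (\<lambda>e. ring_inv (b w') * inv_into UNIV \<iota> e * b w) = lin_trace s UNIV \<kappa>"
      unfolding \<kappa>_def \<iota>i_def ..
    also have "\<dots> = (\<Sum>x\<in>G. tau (\<kappa> (b x) * ring_inv (b x)))" by (rule TR[OF kadd ksc])
    also have "\<dots> = (\<Sum>x\<in>G. \<Sum>i\<in>{1..r'}. of_nat (d i) / NN * mat_trace (\<rho> i (\<kappa> (b x) * ring_inv (b x))))"
      by (simp add: tau_formula)
    also have "\<dots> = (\<Sum>i\<in>{1..r'}. \<Sum>x\<in>G. of_nat (d i) / NN * mat_trace (\<rho> i (ring_inv (b w')) * (\<sigma> i (b x) * \<rho> i (b w) * \<rho> i (ring_inv (b x)))))"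
    proof (subst sum.swap, intro sum.cong refl)
      fix i x assume i: "i \<in> {1..r'}"
      note rp = rep_props[OF rho_rep[OF i]]
      have "\<rho> i (\<kappa> (b x) * ring_inv (b x)) = \<rho> i (ring_inv (b w')) * \<sigma> i (b x) * \<rho> i (b w) * \<rho> i (ring_inv (b x))"
        unfolding \<kappa>_def \<sigma>_def by (simp add: rp(4))
      also have "\<dots> = \<rho> i (ring_inv (b w')) * (\<sigma> i (b x) * \<rho> i (b w) * \<rho> i (ring_inv (b x)))"
      proof -
        have c: "\<sigma> i (b x) \<in> carrier_mat (d i) (d i)" unfolding \<sigma>_def by (rule rp(1))
        have c2: "\<rho> i (ring_inv (b w')) * \<sigma> i (b x) \<in> carrier_mat (d i) (d i)" using rp(1) c by (meson mult_carrier_mat)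
        have "\<rho> i (ring_inv (b w')) * \<sigma> i (b x) * \<rho> i (b w) = \<rho> i (ring_inv (b w')) * (\<sigma> i (b x) * \<rho> i (b w))"
          by (rule assoc_mult_mat[OF rp(1) c rp(1)])
        hence "\<rho> i (ring_inv (b w')) * \<sigma> i (b x) * \<rho> i (b w) * \<rho> i (ring_inv (b x))
            = \<rho> i (ring_inv (b w')) * (\<sigma> i (b x) * \<rho> i (b w)) * \<rho> i (ring_inv (b x))" by simp
        also have "\<dots> = \<rho> i (ring_inv (b w')) * (\<sigma> i (b x) * \<rho> i (b w) * \<rho> i (ring_inv (b x)))"
          by (rule assoc_mult_mat[OF rp(1) _ rp(1)]) (use c rp(1) in \<open>meson mult_carrier_mat\<close>)
        finally show ?thesis .
      qed
      finally show "of_nat (d i) / NN * mat_trace (\<rho> i (\<kappa> (b x) * ring_inv (b x))) =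
        of_nat (d i) / NN * mat_trace (\<rho> i (ring_inv (b w')) * (\<sigma> i (b x) * \<rho> i (b w) * \<rho> i (ring_inv (b x))))" by simp
    qed
    also have "\<dots> = (\<Sum>i\<in>{1..r'}. g i)"
    proof (intro sum.cong refl)
      fix i assume i: "i \<in> {1..r'}"
      note rp = rep_props[OF rho_rep[OF i]]
      have fc: "\<sigma> i (b x) * \<rho> i (b w) * \<rho> i (ring_inv (b x)) \<in> carrier_mat (d i) (d i)" for x
        unfolding \<sigma>_def using rp(1) by (meson mult_carrier_mat)
      have "\<rho> i (ring_inv (b w')) * T i = msum (d i) (d i) (\<lambda>x. \<rho> i (ring_inv (b w')) * (\<sigma> i (b x) * \<rho> i (b w) * \<rho> i (ring_inv (b x)))) G"
        unfolding T_def by (rule mult_msum[OF rp(1) fc])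
      hence "mat_trace (\<rho> i (ring_inv (b w')) * T i) = (\<Sum>x\<in>G. mat_trace (\<rho> i (ring_inv (b w')) * (\<sigma> i (b x) * \<rho> i (b w) * \<rho> i (ring_inv (b x)))))"
      proof -
        have pc: "\<rho> i (ring_inv (b w')) * (\<sigma> i (b x) * \<rho> i (b w) * \<rho> i (ring_inv (b x))) \<in> carrier_mat (d i) (d i)" for x
          using rp(1) fc by (meson mult_carrier_mat)
        show ?thesis using trace_msum[OF pc] by (simp add: \<open>\<rho> i (ring_inv (b w')) * T i = _\<close>)
      qed
      thus "(\<Sum>x\<in>G. of_nat (d i) / NN * mat_trace (\<rho> i (ring_inv (b w')) * (\<sigma> i (b x) * \<rho> i (b w) * \<rho> i (ring_inv (b x))))) = g i"
        unfolding g_def by (simp add: sum_distrib_left)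
    qed
    finally show ?thesis .
  qed
  have trace_zero: "mat_trace (0\<^sub>m n n :: 'k mat) = 0" for n unfolding mat_trace_def by simp
  have g0: "g i = 0" if i: "i \<in> {1..r'}" "\<not> i \<le> r" for i
  proof -
    note rp = rep_props[OF rho_rep[OF i(1)]]
    have si: "is_simple_rep s (d i) (\<rho> i)" using simple i by blast
    have "T i = 0\<^sub>m (d i) (d i)"
    proof (rule ccontr)
      assume nz: "T i \<noteq> 0\<^sub>m (d i) (d i)"
      have inv: "invertible_mat (T i)" using schur_iso[OF ssimple[OF i(1)] si Tc Tint[OF i(1)] nz] by simp
      define K where "K = mat_inv (T i)"
      have Kc: "K \<in> carrier_mat (d i) (d i)" and TK: "T i * K = 1\<^sub>m (d i)" and KT: "K * T i = 1\<^sub>m (d i)"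
        using mat_inv_props[OF Tc inv] unfolding K_def by auto
      have key: "\<rho> i e * T i = T i * \<rho> i (\<iota> e)" for e
        using Tint[OF i(1), of "\<iota> e"] ii2[of e] unfolding \<sigma>_def by simp
      have Kint: "K * \<rho> i e = \<rho> i (\<iota> e) * K" for e
      proof -
        have c1: "K * \<rho> i e \<in> carrier_mat (d i) (d i)" using Kc rp(1) by (meson mult_carrier_mat)
        have "K * \<rho> i e = (K * \<rho> i e) * (T i * K)" using TK right_mult_one_mat[OF c1] by simp
        also have "\<dots> = ((K * \<rho> i e) * T i) * K" by (rule assoc_mult_mat[symmetric, OF c1 Tc Kc])
        also have "(K * \<rho> i e) * T i = K * (\<rho> i e * T i)" by (rule assoc_mult_mat[OF Kc rp(1) Tc])
        also have "\<dots> = K * (T i * \<rho> i (\<iota> e))" by (simp add: key)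
        also have "\<dots> = (K * T i) * \<rho> i (\<iota> e)" by (rule assoc_mult_mat[symmetric, OF Kc Tc rp(1)])
        also have "\<dots> = \<rho> i (\<iota> e)" using KT left_mult_one_mat[OF rp(1)] by simp
        finally show ?thesis .
      qed
      have "invertible_mat K" unfolding invertible_mat_def inverts_mat_def
        using Kc TK KT Tc[of i] by (intro conjI exI[of _ "T i"]) auto
      hence "i \<le> r" using stable_iff i(1) Kc Kint by blast
      thus False using i(2) by simp
    qed
    thus ?thesis unfolding g_def using right_mult_zero_mat[OF rp(1)] trace_zero by simp
  qed
  have g1: "g i = mat_trace (\<rho> i (b w) * J i) * mat_trace (mat_inv (J i) * \<rho> i (ring_inv (b w')))"
    if i: "i \<in> {1..r}" for i
  proof -
    have i': "i \<in> {1..r'}" using i rr' by auto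
    note rp = rep_props[OF rho_rep[OF i']]
    have si: "is_simple_rep s (d i) (\<rho> i)" using simple i' by blast
    have dpos: "d i > 0" using si simple_rep(2) by blast
    define Ji where "Ji = J i"
    have Jc: "Ji \<in> carrier_mat (d i) (d i)" and Jinv: "invertible_mat Ji"
      and Jint: "\<And>e. Ji * \<rho> i e = \<rho> i (\<iota> e) * Ji" using J i unfolding Ji_def by auto
    have Js: "Ji * \<sigma> i e = \<rho> i e * Ji" for e using Jint[of "\<iota>i e"] ii1 unfolding \<sigma>_def by simp
    have Jic: "mat_inv Ji \<in> carrier_mat (d i) (d i)" and JJi: "Ji * mat_inv Ji = 1\<^sub>m (d i)"
      and JiJ: "mat_inv Ji * Ji = 1\<^sub>m (d i)" using mat_inv_props[OF Jc Jinv] by auto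
    have sc: "\<sigma> i e \<in> carrier_mat (d i) (d i)" for e unfolding \<sigma>_def by (rule rp(1))
    define X where "X = \<rho> i (b w)"
    define A where "A = \<rho> i (ring_inv (b w'))"
    have Xc: "X \<in> carrier_mat (d i) (d i)" and Ac: "A \<in> carrier_mat (d i) (d i)" unfolding X_def A_def by (rule rp(1))+
    define JT where "JT = Ji * T i"
    have JTc: "JT \<in> carrier_mat (d i) (d i)" unfolding JT_def using Jc Tc by (meson mult_carrier_mat)
    have comm: "JT * \<rho> i e = \<rho> i e * JT" for e
    proof -
      have "JT * \<rho> i e = Ji * (T i * \<rho> i e)" unfolding JT_def by (rule assoc_mult_mat[OF Jc Tc rp(1)])
      also have "\<dots> = Ji * (\<sigma> i e * T i)" using Tint[OF i'] by simp
      also have "\<dots> = (Ji * \<sigma> i e) * T i" by (rule assoc_mult_mat[symmetric, OF Jc sc Tc])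
      also have "\<dots> = (\<rho> i e * Ji) * T i" using Js by simp
      also have "\<dots> = \<rho> i e * JT" unfolding JT_def by (rule assoc_mult_mat[OF rp(1) Jc Tc])
      finally show ?thesis .
    qed
    obtain c where c: "JT = c \<cdot>\<^sub>m 1\<^sub>m (d i)" using schur_scalar[OF cl si JTc comm] by blast
    have fc: "\<sigma> i (b x) * X * \<rho> i (ring_inv (b x)) \<in> carrier_mat (d i) (d i)" for x
      using sc Xc rp(1) by (meson mult_carrier_mat)
    have JTsum: "JT = msum (d i) (d i) (\<lambda>x. Ji * (\<sigma> i (b x) * X * \<rho> i (ring_inv (b x)))) G"
      unfolding JT_def T_def X_def[symmetric] by (rule mult_msum[OF Jc fc])
    have trm: "Ji * (\<sigma> i (b x) * X * \<rho> i (ring_inv (b x))) = \<rho> i (b x) * (Ji * X) * \<rho> i (ring_inv (b x))" for x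
    proof -
      have c1: "\<sigma> i (b x) * X \<in> carrier_mat (d i) (d i)" using sc Xc by (meson mult_carrier_mat)
      have "Ji * (\<sigma> i (b x) * X * \<rho> i (ring_inv (b x))) = (Ji * (\<sigma> i (b x) * X)) * \<rho> i (ring_inv (b x))"
        by (rule assoc_mult_mat[symmetric, OF Jc c1 rp(1)])
      also have "Ji * (\<sigma> i (b x) * X) = (Ji * \<sigma> i (b x)) * X" by (rule assoc_mult_mat[symmetric, OF Jc sc Xc])
      also have "\<dots> = (\<rho> i (b x) * Ji) * X" using Js by simp
      also have "\<dots> = \<rho> i (b x) * (Ji * X)" by (rule assoc_mult_mat[OF rp(1) Jc Xc])
      finally show ?thesis .
    qed
    have JXc: "Ji * X \<in> carrier_mat (d i) (d i)" using Jc Xc by (meson mult_carrier_mat)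
    have "mat_trace JT = (\<Sum>x\<in>G. mat_trace (Ji * (\<sigma> i (b x) * X * \<rho> i (ring_inv (b x)))))"
    proof -
      have pc: "Ji * (\<sigma> i (b x) * X * \<rho> i (ring_inv (b x))) \<in> carrier_mat (d i) (d i)" for x
        using Jc fc by (meson mult_carrier_mat)
      show ?thesis using trace_msum[OF pc] JTsum by simp
    qed
    also have "\<dots> = NN * mat_trace (Ji * X)" unfolding trm NN_def by (rule avg_trace[OF rho_rep[OF i'] JXc])
    finally have trJT: "mat_trace JT = NN * mat_trace (Ji * X)" .
    have "mat_trace JT = c * of_nat (d i)" using c trace_smult[OF one_carrier_mat, of c "d i"] trace_one[of "d i", where 'a='k] by simp
    hence cval: "c = NN * mat_trace (Ji * X) / of_nat (d i)" using trJT dpos by (simp add: field_simps)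
    have "T i = mat_inv Ji * JT"
    proof -
      have "mat_inv Ji * JT = (mat_inv Ji * Ji) * T i" unfolding JT_def by (rule assoc_mult_mat[symmetric, OF Jic Jc Tc])
      thus ?thesis using JiJ left_mult_one_mat[OF Tc] by simp
    qed
    also have "\<dots> = c \<cdot>\<^sub>m mat_inv Ji" using c mult_smult_distrib[OF Jic one_carrier_mat, of c] right_mult_one_mat[OF Jic] by simp
    finally have Tval: "T i = c \<cdot>\<^sub>m mat_inv Ji" .
    have AJc: "A * mat_inv Ji \<in> carrier_mat (d i) (d i)" using Ac Jic by (meson mult_carrier_mat)
    have "g i = of_nat (d i) / NN * mat_trace (A * (c \<cdot>\<^sub>m mat_inv Ji))" unfolding g_def A_def Tval ..
    also have "\<dots> = of_nat (d i) / NN * (c * mat_trace (A * mat_inv Ji))"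
      using mult_smult_distrib[OF Ac Jic, of c] trace_smult[OF AJc, of c] by simp
    also have "\<dots> = mat_trace (Ji * X) * mat_trace (A * mat_inv Ji)" using cval dpos NN0 by (simp add: field_simps)
    also have "mat_trace (Ji * X) = mat_trace (X * Ji)" by (rule trace_comm[OF Jc Xc])
    also have "mat_trace (A * mat_inv Ji) = mat_trace (mat_inv Ji * A)" by (rule trace_comm[OF Ac Jic])
    finally show ?thesis unfolding X_def A_def Ji_def .
  qed
  have "(\<Sum>i\<in>{1..r'}. g i) = (\<Sum>i\<in>{1..r}. g i)"
    by (rule sum.mono_neutral_right) (use rr' g0 in auto)
  also have "\<dots> = (\<Sum>i=1..r. mat_trace (\<rho> i (b w) * J i) * mat_trace (mat_inv (J i) * \<rho> i (ring_inv (b w'))))"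
    by (rule sum.cong) (use g1 in auto)
  finally show ?thesis using RHS by simp
qed

end

theorem mainTheorem14:
  fixes \<Gamma> :: "('g, 'h) monoid_scheme"
    and s :: "'k::field_char_0 \<Rightarrow> 'e::ring_1 \<Rightarrow> 'e"
    and Eg :: "'g \<Rightarrow> 'e set"
    and b :: "'g \<Rightarrow> 'e"
    and \<iota> :: "'e \<Rightarrow> 'e"
    and r r' :: nat
    and d :: "nat \<Rightarrow> nat"
    and \<rho> :: "nat \<Rightarrow> 'e \<Rightarrow> 'k mat"
    and J :: "nat \<Rightarrow> 'k mat"
    and w w' :: 'g
  assumes closed: "alg_closed_field TYPE('k)"
    and grp: "group \<Gamma>" and fin: "finite (carrier \<Gamma>)"
    and alg: "is_algebra s"
    and Eg_sub: "\<forall>x\<in>carrier \<Gamma>. module.subspace s (Eg x)"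
    and Eg_dim: "\<forall>x\<in>carrier \<Gamma>. vector_space.dim s (Eg x) = 1"
    and Eg_dsum: "\<forall>e. \<exists>!f. (\<forall>x\<in>carrier \<Gamma>. f x \<in> Eg x) \<and> (\<forall>x. x \<notin> carrier \<Gamma> \<longrightarrow> f x = 0)
                          \<and> e = (\<Sum>x\<in>carrier \<Gamma>. f x)"
    and Eg_mult: "\<forall>x\<in>carrier \<Gamma>. \<forall>y\<in>carrier \<Gamma>.
                    {u * v | u v. u \<in> Eg x \<and> v \<in> Eg y} = Eg (x \<otimes>\<^bsub>\<Gamma>\<^esub> y)"
    and b_in: "\<forall>x\<in>carrier \<Gamma>. b x \<in> Eg x \<and> b x \<noteq> 0"
    and auto: "is_alg_auto s \<iota>"
    and rr': "r \<le> r'"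
    and simple: "\<forall>i\<in>{1..r'}. is_simple_rep s (d i) (\<rho> i)"
    and distinct: "\<forall>i\<in>{1..r'}. \<forall>j\<in>{1..r'}. rep_iso (d i) (\<rho> i) (d j) (\<rho> j) \<longrightarrow> i = j"
    and complete: "\<forall>n \<sigma>. is_simple_rep s n \<sigma> \<longrightarrow> (\<exists>i\<in>{1..r'}. rep_iso n \<sigma> (d i) (\<rho> i))"
    and stable_iff: "\<forall>i\<in>{1..r'}. i \<le> r \<longleftrightarrow>
                       (\<exists>K \<in> carrier_mat (d i) (d i). invertible_mat K \<and>
                          (\<forall>e. K * \<rho> i e = \<rho> i (\<iota> e) * K))"
    and J: "\<forall>i\<in>{1..r}. J i \<in> carrier_mat (d i) (d i) \<and> invertible_mat (J i) \<and>
                          (\<forall>e. J i * \<rho> i e = \<rho> i (\<iota> e) * J i)"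
    and w: "w \<in> carrier \<Gamma>" and w': "w' \<in> carrier \<Gamma>"
  shows "(\<Sum>i=1..r. mat_trace (\<rho> i (b w) * J i) *
                    mat_trace (mat_inv (J i) * \<rho> i (ring_inv (b w'))))
         = lin_trace s UNIV (\<lambda>e. ring_inv (b w') * inv_into UNIV \<iota> e * b w)"
proof -
  interpret T: tga_reps \<Gamma> s Eg b r' d \<rho>
    unfolding tga_reps_def tga_def tga_reps_axioms_def
    by (intro conjI; rule assms)
  show ?thesis by (rule T.main_locale[OF auto rr' stable_iff J w w'])
qed

end
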